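(* Consider the FIR system $y_t = b_1 u_{t-1} + \dots + b_N u_{t-N} + w_t$ satisfying the assumptions below, and run the following procedure (Algorithm 3). Fix a threshold $c_u$ such that $\mathbb{E}[u \mid u > c_u] \neq \mathbb{E}[u]$ and $\mathbb{E}[u \mid u > c_u] \neq (1-N)\mathbb{E}[u]$, where $u$ has the common distribution of the $u_t$, and step sizes $\alpha_j > 0$ with $\sum_j \alpha_j = \infty$, $\sum_j \alpha_j^2 < \infty$. Let $\tau_1 < \tau_2 < \dots$ be the successive times $t \ge 1$ with $u_t > c_u$, and for $n = 1,\dots,N$ and $i \ge 1$ let $d_{n,i} = \frac{1}{i}\sum_{i'=1}^{i} y_{\tau_{i'} + n}$ (computed by the output quantizer). With $\hat{d}_{n,1} = 0$, define for $j \ge 1$ \[ \hat{d}_{n,j+1} = \hat{d}_{n,j} + \alpha_j\,\mathrm{sgn}\big(d_{n,Nj} - \hat{d}_{n,j}\big), \qquad n = 1,\dots,N, \] (only the binary values $\mathrm{sgn}(d_{n,Nj} - \hat d_{n,j})$ being transmitted to the estimator), and \[ \big[\hat{b}_{1,j},\dots,\hat{b}_{N,j}\big]^T = \mathbf{U}^{-1}\big[\hat{d}_{1,j},\dots,\hat{d}_{N,j}\big]^T, \] where $\mathbf{U}$ is the $N\times N$ matrix with all diagonal entries equal to $\mathbb{E}[u \mid u > c_u]$ and all off-diagonal entries equal to $\mathbb{E}[u]$. Then $\hat{b}_{n,j} \to b_n$ almost surely as $j \to \infty$, for every $n = 1,\dots,N$.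
   Context: Standing assumptions: the input and output quantizers have computational and storage capabilities (they can compute the running averages described, with access to the unquantized $u_t$, $y_t$); $\{u_t\}$ and $\{w_t\}$ are i.i.d. sequences, mutually independent, and $w_t$ has zero mean; the model order $N$ is known; the input distribution is known to the estimator (so $\mathbb{E}[u]$ and $\mathbb{E}[u\mid u>c_u]$, assumed to exist, are known). The function $\mathrm{sgn}$ is defined by $\mathrm{sgn}(x) = -1$ for $x < 0$ and $\mathrm{sgn}(x) = 1$ for $x > 0$ (the paper does not specify a value at $0$). *)

theory Defs
  imports "HOL-Probability.Probability" "HOL-Library.Infinite_Set"
    "Jordan_Normal_Form.Gauss_Jordan_Elimination"
begin

definition cond_exp_above :: "'a measure \<Rightarrow> ('a \<Rightarrow> real) \<Rightarrow> real \<Rightarrow> real" where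
  "cond_exp_above M X c =
     (\<integral>x. X x * indicator {x \<in> space M. X x > c} x \<partial>M) / measure M {x \<in> space M. X x > c}"

definition fir_out :: "(nat \<Rightarrow> real) \<Rightarrow> nat \<Rightarrow> (int \<Rightarrow> 'a \<Rightarrow> real) \<Rightarrow> (int \<Rightarrow> 'a \<Rightarrow> real)
                       \<Rightarrow> int \<Rightarrow> 'a \<Rightarrow> real" where
  "fir_out b N u w t \<omega> = (\<Sum>k=1..N. b k * u (t - int k) \<omega>) + w t \<omega>"

definition tau :: "(int \<Rightarrow> 'a \<Rightarrow> real) \<Rightarrow> real \<Rightarrow> 'a \<Rightarrow> nat \<Rightarrow> int" where
  "tau u c \<omega> i = int (enumerate {t::nat. 1 \<le> t \<and> u (int t) \<omega> > c} (i - 1))"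

definition davg :: "(nat \<Rightarrow> real) \<Rightarrow> nat \<Rightarrow> (int \<Rightarrow> 'a \<Rightarrow> real) \<Rightarrow> (int \<Rightarrow> 'a \<Rightarrow> real)
                    \<Rightarrow> real \<Rightarrow> nat \<Rightarrow> nat \<Rightarrow> 'a \<Rightarrow> real" where
  "davg b N u w c n i \<omega> =
     (1 / real i) * (\<Sum>i'=1..i. fir_out b N u w (tau u c \<omega> i' + int n) \<omega>)"

text \<open>Sign-error recursion: dhat 1 = 0, dhat (j+1) = dhat j + alpha j * sg (D j - dhat j),
  where D j stands for d_{n,Nj}. The value at index 0 is a dummy.\<close>
fun dhat :: "(nat \<Rightarrow> real) \<Rightarrow> (real \<Rightarrow> real) \<Rightarrow> (nat \<Rightarrow> real) \<Rightarrow> nat \<Rightarrow> real" where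
  "dhat \<alpha> sg D 0 = 0"
| "dhat \<alpha> sg D (Suc 0) = 0"
| "dhat \<alpha> sg D (Suc (Suc j)) =
     dhat \<alpha> sg D (Suc j) + \<alpha> (Suc j) * sg (D (Suc j) - dhat \<alpha> sg D (Suc j))"

text \<open>U: N x N matrix, diagonal m1 = E[u | u > c_u], off-diagonal m0 = E[u].\<close>
definition Umat :: "nat \<Rightarrow> real \<Rightarrow> real \<Rightarrow> real mat" where
  "Umat N m0 m1 = mat N N (\<lambda>(i, j). if i = j then m1 else m0)"

text \<open>Estimate vector [bhat_{1,j},...,bhat_{N,j}] = U^{-1} [dhat_{1,j},...,dhat_{N,j}]
  (component n-1 of the JNF vector is bhat_{n,j}).\<close>
definition bhat :: "(nat \<Rightarrow> real) \<Rightarrow> nat \<Rightarrow> (int \<Rightarrow> 'a \<Rightarrow> real) \<Rightarrow> (int \<Rightarrow> 'a \<Rightarrow> real)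
                    \<Rightarrow> real \<Rightarrow> real \<Rightarrow> real \<Rightarrow> (nat \<Rightarrow> real) \<Rightarrow> (real \<Rightarrow> real)
                    \<Rightarrow> nat \<Rightarrow> 'a \<Rightarrow> real vec" where
  "bhat b N u w c m0 m1 \<alpha> sg j \<omega> =
     the (mat_inverse (Umat N m0 m1)) *\<^sub>v
       vec N (\<lambda>k. dhat \<alpha> sg (\<lambda>l. davg b N u w c (k + 1) (N * l) \<omega>) j)"

end

theory Submission
  imports Defs
begin

lemma cesaro:
  fixes a :: "nat \<Rightarrow> real"
  assumes "a \<longlonglongrightarrow> L"
  shows "(\<lambda>n. (\<Sum>k<n. a k) / real n) \<longlonglongrightarrow> L"
proof (rule LIMSEQ_I)
  fix r :: real assume r: "r > 0"
  obtain N where N: "\<And>k. k \<ge> N \<Longrightarrow> norm (a k - L) < r/2"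
    using LIMSEQ_D[OF assms, of "r/2"] r by auto
  define C where "C = (\<Sum>k<N. \<bar>a k - L\<bar>)"
  have C0: "C \<ge> 0" unfolding C_def by (auto intro: sum_nonneg)
  obtain N2 :: nat where N2: "real N2 > 2 * C / r" using reals_Archimedean2 by blast
  show "\<exists>no. \<forall>n\<ge>no. norm ((\<Sum>k<n. a k) / real n - L) < r"
  proof (intro exI allI impI)
    fix n assume n: "n \<ge> max (Suc N) N2"
    then have npos: "real n > 0" by auto
    have "(\<Sum>k<n. a k) / real n - L = (\<Sum>k<n. a k - L) / real n"
      using npos by (simp add: sum_subtractf field_simps)
    moreover have "\<bar>\<Sum>k<n. a k - L\<bar> \<le> C + real n * (r/2)"
    proof -
      have split: "{..<n} = {..<N} \<union> {N..<n}" using n by auto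
      have "\<bar>\<Sum>k<n. a k - L\<bar> \<le> (\<Sum>k<n. \<bar>a k - L\<bar>)" by (rule sum_abs)
      also have "\<dots> = C + (\<Sum>k\<in>{N..<n}. \<bar>a k - L\<bar>)"
        unfolding C_def split by (subst sum.union_disjoint) auto
      also have "(\<Sum>k\<in>{N..<n}. \<bar>a k - L\<bar>) \<le> (\<Sum>k\<in>{N..<n}. r/2)"
        using N by (intro sum_mono) (auto intro: less_imp_le)
      also have "\<dots> \<le> real n * (r/2)" using r by simp
      finally show ?thesis by simp
    qed
    moreover have "C < real n * (r/2)"
    proof -
      have "real N2 \<le> real n" using n by auto
      then have "2*C/r < real n" using N2 by linarith
      then show ?thesis using r by (simp add: field_simps)
    qed
    ultimately show "norm ((\<Sum>k<n. a k) / real n - L) < r"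
      using npos by (simp add: abs_divide field_simps)
  qed
qed

lemma interp:
  fixes s :: "nat \<Rightarrow> real" and \<mu> :: real
  assumes mono: "mono s" and s0: "\<And>n. s n \<ge> 0" and mu0: "\<mu> \<ge> 0"
    and H: "\<And>j::nat. \<exists>kk::nat\<Rightarrow>nat. filterlim kk at_top sequentially \<and> (\<forall>n. kk n > 0) \<and>
              (\<lambda>n. real (kk (Suc n)) / real (kk n)) \<longlonglongrightarrow> 1 + 1 / real (Suc j) \<and>
              (\<lambda>n. s (kk n) / real (kk n)) \<longlonglongrightarrow> \<mu>"
  shows "(\<lambda>n. s n / real n) \<longlonglongrightarrow> \<mu>"
proof (rule LIMSEQ_I)
  fix e :: real assume e: "e > 0"
  obtain j :: nat where j: "1 / real (Suc j) < e / (2 * (\<mu> + 1))"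
  proof -
    have "e / (2 * (\<mu> + 1)) > 0" using e mu0 by simp
    then obtain j where "inverse (real (Suc j)) < e / (2 * (\<mu> + 1))"
      using reals_Archimedean by blast
    then show ?thesis using that by (simp add: divide_inverse)
  qed
  define \<beta> where "\<beta> = 1 + 1 / real (Suc j)"
  have b1: "\<beta> > 1" unfolding \<beta>_def by simp
  have bmu: "\<mu> * (\<beta> - 1) \<le> e / 2"
  proof -
    have "\<mu> * (\<beta> - 1) = \<mu> * (1 / real (Suc j))" unfolding \<beta>_def by simp
    also have "\<dots> \<le> \<mu> * (e / (2 * (\<mu> + 1)))" using j mu0 by (intro mult_left_mono) auto
    also have "\<dots> \<le> e / 2" using mu0 e by (simp add: field_simps)
    finally show ?thesis .
  qed
  obtain kk :: "nat \<Rightarrow> nat" where kk: "filterlim kk at_top sequentially" "\<And>n. kk n > 0"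
    "(\<lambda>n. real (kk (Suc n)) / real (kk n)) \<longlonglongrightarrow> \<beta>"
    "(\<lambda>n. s (kk n) / real (kk n)) \<longlonglongrightarrow> \<mu>"
    using H[of j] unfolding \<beta>_def by blast
  have up: "(\<lambda>n. s (kk (Suc n)) / real (kk (Suc n)) * (real (kk (Suc n)) / real (kk n))) \<longlonglongrightarrow> \<mu> * \<beta>"
    by (intro tendsto_mult kk(3) LIMSEQ_Suc[OF kk(4)])
  have lo: "(\<lambda>n. s (kk n) / real (kk n) / (real (kk (Suc n)) / real (kk n))) \<longlonglongrightarrow> \<mu> / \<beta>"
    using b1 by (intro tendsto_divide kk(3) kk(4)) auto
  have ev1: "eventually (\<lambda>n. s (kk (Suc n)) / real (kk (Suc n)) * (real (kk (Suc n)) / real (kk n)) < \<mu> * \<beta> + e/2) sequentially"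
    using up e by (intro order_tendstoD) auto
  have ev2: "eventually (\<lambda>n. s (kk n) / real (kk n) / (real (kk (Suc n)) / real (kk n)) > \<mu> / \<beta> - e/2) sequentially"
    using lo e by (intro order_tendstoD) auto
  obtain N0 where N0: "\<And>n. n \<ge> N0 \<Longrightarrow> s (kk (Suc n)) / real (kk (Suc n)) * (real (kk (Suc n)) / real (kk n)) < \<mu> * \<beta> + e/2 \<and>
      s (kk n) / real (kk n) / (real (kk (Suc n)) / real (kk n)) > \<mu> / \<beta> - e/2"
    using eventually_conj[OF ev1 ev2] unfolding eventually_sequentially by blast
  show "\<exists>no. \<forall>m\<ge>no. norm (s m / real m - \<mu>) < e"
  proof (intro exI allI impI)
    fix m assume m: "m \<ge> kk N0"
    have mpos: "m > 0" using m kk(2)[of N0] by linarith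
    define A where "A = {n. kk n \<le> m}"
    have finA: "finite A"
    proof -
      have "eventually (\<lambda>n. kk n \<ge> Suc m) sequentially"
        using kk(1) by (simp add: filterlim_at_top)
      then obtain K where "\<And>n. n \<ge> K \<Longrightarrow> kk n \<ge> Suc m" unfolding eventually_sequentially by blast
      then have "A \<subseteq> {..<K}" unfolding A_def by (auto, metis le_less_trans lessI not_le)
      then show ?thesis by (rule finite_subset) auto
    qed
    have N0A: "N0 \<in> A" using m unfolding A_def by simp
    define n where "n = Max A"
    have nA: "n \<in> A" unfolding n_def using finA N0A by (intro Max_in) auto
    have nN0: "n \<ge> N0" unfolding n_def using finA N0A by (intro Max_ge) auto
    have Sn: "Suc n \<notin> A"
    proof
      assume "Suc n \<in> A" then have "Suc n \<le> n" unfolding n_def using finA by (intro Max_ge) auto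
      then show False by simp
    qed
    have kn: "kk n \<le> m" using nA unfolding A_def by simp
    have kSn: "m < kk (Suc n)" using Sn unfolding A_def by simp
    have kpos: "real (kk n) > 0" "real (kk (Suc n)) > 0" using kk(2) by auto
    have upper: "s m / real m \<le> s (kk (Suc n)) / real (kk (Suc n)) * (real (kk (Suc n)) / real (kk n))"
    proof -
      have "s m \<le> s (kk (Suc n))" using mono kSn by (auto simp: mono_def)
      then have "s m / real m \<le> s (kk (Suc n)) / real m" using mpos by (simp add: divide_right_mono)
      also have "\<dots> \<le> s (kk (Suc n)) / real (kk n)"
        using kn kpos s0[of "kk (Suc n)"] by (intro divide_left_mono) auto
      also have "\<dots> = s (kk (Suc n)) / real (kk (Suc n)) * (real (kk (Suc n)) / real (kk n))"
        using kpos by simp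
      finally show ?thesis .
    qed
    have lower: "s m / real m \<ge> s (kk n) / real (kk n) / (real (kk (Suc n)) / real (kk n))"
    proof -
      have "s (kk n) / real (kk n) / (real (kk (Suc n)) / real (kk n)) = s (kk n) / real (kk (Suc n))"
        using kpos by simp
      also have "\<dots> \<le> s (kk n) / real m"
        using kSn mpos s0[of "kk n"] by (intro divide_left_mono) auto
      also have "\<dots> \<le> s m / real m" using mono kn mpos by (auto simp: mono_def intro: divide_right_mono)
      finally show ?thesis .
    qed
    have "\<mu> / \<beta> \<ge> \<mu> - e/2"
    proof -
      have "\<mu> - \<mu> / \<beta> = \<mu> * (\<beta> - 1) / \<beta>" using b1 by (simp add: field_simps)
      also have "\<dots> \<le> \<mu> * (\<beta> - 1)" using b1 mu0 by (simp add: divide_le_eq mult_le_cancel_left1 not_less)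
      finally show ?thesis using bmu by linarith
    qed
    moreover have "\<mu> * \<beta> \<le> \<mu> + e/2" using bmu by (simp add: algebra_simps)
    ultimately show "norm (s m / real m - \<mu>) < e"
      using upper lower N0[OF nN0] by (simp add: abs_less_iff)
  qed
qed

lemma decr_summable:
  fixes x a :: "nat \<Rightarrow> real"
  assumes "\<And>n. n \<ge> N \<Longrightarrow> x (Suc n) = x n - a n" "\<And>n. a n \<ge> 0" "\<And>n. n \<ge> N \<Longrightarrow> x n \<ge> c"
  shows "summable a"
proof (rule summableI_nonneg_bounded)
  show "\<And>n. 0 \<le> a n" by fact
  have tel: "x (N + k) = x N - (\<Sum>i<k. a (N + i))" for k
    by (induction k) (auto simp: assms(1))
  fix n
  have "(\<Sum>i<n. a i) \<le> (\<Sum>i<N + n. a i)" using assms(2) by (intro sum_mono2) auto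
  also have "\<dots> = (\<Sum>i<N. a i) + (\<Sum>i<n. a (N + i))" by (induction n) auto
  also have "(\<Sum>i<n. a (N + i)) \<le> x N - c" using tel[of n] assms(3)[of "N+n"] by simp
  finally show "(\<Sum>i<n. a i) \<le> (\<Sum>i<N. a i) + (x N - c)" by simp
qed

lemma dhat_conv:
  fixes D \<alpha> :: "nat \<Rightarrow> real" and sg :: "real \<Rightarrow> real"
  assumes D: "D \<longlonglongrightarrow> d" and a0: "\<alpha> \<longlonglongrightarrow> 0" and apos: "\<And>j. j \<ge> 1 \<Longrightarrow> \<alpha> j > 0"
    and ns: "\<not> summable \<alpha>" and sgn: "\<And>x. x < 0 \<Longrightarrow> sg x = -1" "\<And>x. x > 0 \<Longrightarrow> sg x = 1"
  shows "(\<lambda>j. dhat \<alpha> sg D j) \<longlonglongrightarrow> d"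
proof -
  define x where "x j = dhat \<alpha> sg D (Suc j)" for j
  define a where "a j = \<alpha> (Suc j)" for j
  define E where "E j = D (Suc j)" for j
  have rec: "x (Suc j) = x j + a j * sg (E j - x j)" for j unfolding x_def a_def E_def by simp
  have apos': "a j > 0" for j unfolding a_def using apos by simp
  have nsa: "\<not> summable a" using ns unfolding a_def by (simp add: summable_Suc_iff)
  have E: "E \<longlonglongrightarrow> d" unfolding E_def by (rule LIMSEQ_Suc[OF D])
  have a0': "a \<longlonglongrightarrow> 0" unfolding a_def by (rule LIMSEQ_Suc[OF a0])
  define K where "K = max 1 \<bar>sg 0\<bar>"
  have K: "\<bar>sg z\<bar> \<le> K" for z unfolding K_def using sgn by (cases z "0::real" rule: linorder_cases) auto
  have K1: "K \<ge> 1" unfolding K_def by simp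
  have "x \<longlonglongrightarrow> d"
  proof (rule LIMSEQ_I)
    fix e :: real assume e: "e > 0"
    have ev1: "eventually (\<lambda>n. \<bar>E n - d\<bar> < e/3) sequentially"
    proof -
      have "\<forall>r>0. eventually (\<lambda>n. \<bar>E n - d\<bar> < r) sequentially"
        using E by (simp add: tendsto_iff dist_real_def)
      from this[rule_format, of "e/3"] e show ?thesis by simp
    qed
    have ev2: "eventually (\<lambda>n. \<bar>a n\<bar> < e/(3*K)) sequentially"
    proof -
      have "\<forall>r>0. eventually (\<lambda>n. \<bar>a n\<bar> < r) sequentially"
        using a0' by (simp add: tendsto_iff dist_real_def)
      from this[rule_format, of "e/(3*K)"] e K1 show ?thesis by simp
    qed
    obtain N where N: "\<And>n. n \<ge> N \<Longrightarrow> \<bar>E n - d\<bar> < e/3 \<and> \<bar>a n\<bar> < e/(3*K)"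
      using eventually_conj[OF ev1 ev2] unfolding eventually_sequentially by blast
    have step: "\<bar>a n * sg z\<bar> < e/3" if "n \<ge> N" for n z
    proof -
      have "\<bar>a n * sg z\<bar> \<le> \<bar>a n\<bar> * K" by (simp add: abs_mult K mult_left_mono)
      also have "\<dots> < e/(3*K) * K" using N[OF that] K1 by (intro mult_strict_right_mono) auto
      finally show ?thesis using K1 by simp
    qed
    have inv: "\<bar>x (Suc n) - d\<bar> \<le> 2*e/3" if n: "n \<ge> N" and h: "\<bar>x n - d\<bar> \<le> 2*e/3" for n
    proof (cases "E n - x n" "0::real" rule: linorder_cases)
      case less
      then have "x (Suc n) = x n - a n" using rec sgn by simp
      moreover have "a n < e/3" using step[OF n, of "-1"] sgn(1)[of "-1"] apos'[of n] by simp
      ultimately show ?thesis using N[OF n] h less apos'[of n] by (auto simp only: abs_le_iff abs_less_iff)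
    next
      case greater
      then have "x (Suc n) = x n + a n" using rec sgn by simp
      moreover have "a n < e/3" using step[OF n, of "-1"] sgn(1)[of "-1"] apos'[of n] by simp
      ultimately show ?thesis using N[OF n] h greater apos'[of n] by (auto simp only: abs_le_iff abs_less_iff)
    next
      case equal
      then have "x (Suc n) = E n + a n * sg 0" using rec by simp
      then show ?thesis using N[OF n] step[OF n, of 0] by (auto simp only: abs_le_iff abs_less_iff)
    qed
    have ex: "\<exists>n\<ge>N. \<bar>x n - d\<bar> \<le> 2*e/3"
    proof (rule ccontr)
      assume "\<not> ?thesis"
      then have far: "\<And>n. n \<ge> N \<Longrightarrow> \<bar>x n - d\<bar> > 2*e/3" by force
      have asmall: "a n < e/3" if "n \<ge> N" for n using step[OF that, of "-1"] sgn(1)[of "-1"] by simp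
      show False
      proof (cases "x N > d")
        case True
        have above: "x n > d + 2*e/3" if "n \<ge> N" for n
          using that
        proof (induction n rule: dec_induct)
          case base then show ?case using far[of N] True by (auto simp: abs_less_iff)
        next
          case (step n)
          then have "E n - x n < 0" using N[OF \<open>N \<le> n\<close>] by (auto simp only: abs_less_iff)
          then have "x (Suc n) = x n - a n" using rec sgn by simp
          then have "x (Suc n) > d - 2*e/3" using step asmall[of n] e by simp
          moreover have "2*e/3 < \<bar>x (Suc n) - d\<bar>" using far[of "Suc n"] step(1) by simp
          ultimately show ?case by linarith
        qed
        have "summable a"
        proof (rule decr_summable[where N=N and x=x and c=d])
          fix n assume n: "n \<ge> N"
          then have "E n - x n < 0" using N[OF \<open>N \<le> n\<close>] above[OF n] by (auto simp only: abs_less_iff)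
          then show "x (Suc n) = x n - a n" using rec sgn by simp
          show "x n \<ge> d" using above[OF n] e by simp
        qed (use apos' in \<open>auto intro: less_imp_le\<close>)
        then show False using nsa by simp
      next
        case False
        have below: "x n < d - 2*e/3" if "n \<ge> N" for n
          using that
        proof (induction n rule: dec_induct)
          case base then show ?case using far[of N] False by (auto simp: abs_less_iff)
        next
          case (step n)
          then have "E n - x n > 0" using N[OF \<open>N \<le> n\<close>] by (auto simp only: abs_less_iff)
          then have "x (Suc n) = x n + a n" using rec sgn by simp
          then have "x (Suc n) < d + 2*e/3" using step asmall[of n] e by simp
          moreover have "2*e/3 < \<bar>x (Suc n) - d\<bar>" using far[of "Suc n"] step(1) by simp
          ultimately show ?case by linarith
        qed
        have "summable a"
        proof (rule decr_summable[where N=N and x="\<lambda>n. - x n" and c="-d"])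
          fix n assume n: "n \<ge> N"
          then have "E n - x n > 0" using N[OF \<open>N \<le> n\<close>] below[OF n] by (auto simp only: abs_less_iff)
          then show "- x (Suc n) = - x n - a n" using rec sgn by simp
          show "- x n \<ge> - d" using below[OF n] e by simp
        qed (use apos' in \<open>auto intro: less_imp_le\<close>)
        then show False using nsa by simp
      qed
    qed
    then obtain n0 where n0: "n0 \<ge> N" "\<bar>x n0 - d\<bar> \<le> 2*e/3" by blast
    have all: "\<bar>x n - d\<bar> \<le> 2*e/3" if "n \<ge> n0" for n
      using that
    proof (induction n rule: dec_induct)
      case base then show ?case using n0 by simp
    next
      case (step n) then show ?case using inv n0 by simp
    qed
    show "\<exists>no. \<forall>n\<ge>no. norm (x n - d) < e"
    proof (intro exI[of _ n0] allI impI)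
      fix n assume "n \<ge> n0"
      from all[OF this] e show "norm (x n - d) < e" by simp
    qed
  qed
  then have "(\<lambda>j. x j) \<longlonglongrightarrow> d" by simp
  then show ?thesis unfolding x_def by (rule LIMSEQ_imp_Suc)
qed


lemma (in prob_space) indep_vars_pair:
  assumes "indep_vars M' X I" "i \<in> I" "j \<in> I" "i \<noteq> j"
  shows "indep_var (M' i) (X i) (M' j) (X j)"
proof -
  have "indep_var (M' i) ((\<lambda>f. f i) \<circ> (\<lambda>\<omega>. restrict (\<lambda>k. X k \<omega>) {i}))
                  (M' j) ((\<lambda>f. f j) \<circ> (\<lambda>\<omega>. restrict (\<lambda>k. X k \<omega>) {j}))"
    using assms by (intro indep_var_compose[OF indep_var_restrict[OF assms(1)]])
       (auto intro!: measurable_component_singleton)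
  also have "((\<lambda>f. f i) \<circ> (\<lambda>\<omega>. restrict (\<lambda>k. X k \<omega>) {i})) = X i" by auto
  also have "((\<lambda>f. f j) \<circ> (\<lambda>\<omega>. restrict (\<lambda>k. X k \<omega>) {j})) = X j" by auto
  finally show ?thesis .
qed

locale iid_seq = prob_space +
  fixes X :: "nat \<Rightarrow> 'a \<Rightarrow> real"
  assumes indep: "indep_vars (\<lambda>_. borel) X UNIV"
    and distr_eq: "\<And>k. distr M borel (X k) = distr M borel (X 0)"
    and int0: "integrable M (X 0)"
begin

lemma meas[measurable]: "X k \<in> borel_measurable M"
  using indep unfolding indep_vars_def by auto

lemma same_integral:
  fixes g :: "real \<Rightarrow> real"
  assumes [measurable]: "g \<in> borel_measurable borel"
  shows "(\<integral>\<omega>. g (X k \<omega>) \<partial>M) = (\<integral>\<omega>. g (X 0 \<omega>) \<partial>M)"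
proof -
  have "(\<integral>\<omega>. g (X k \<omega>) \<partial>M) = (\<integral>x. g x \<partial>distr M borel (X k))"
    using integral_distr[of "X k" M borel g] by simp
  also have "\<dots> = (\<integral>x. g x \<partial>distr M borel (X 0))" by (simp add: distr_eq[of k])
  also have "\<dots> = (\<integral>\<omega>. g (X 0 \<omega>) \<partial>M)"
    by (rule integral_distr) auto
  finally show ?thesis .
qed

lemma same_integrable:
  fixes g :: "real \<Rightarrow> real"
  assumes [measurable]: "g \<in> borel_measurable borel"
  shows "integrable M (\<lambda>\<omega>. g (X k \<omega>)) \<longleftrightarrow> integrable M (\<lambda>\<omega>. g (X 0 \<omega>))"
proof -
  have "integrable M (\<lambda>\<omega>. g (X k \<omega>)) \<longleftrightarrow> integrable (distr M borel (X k)) g"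
    using integrable_distr_eq[of "X k" M borel g] by simp
  also have "\<dots> \<longleftrightarrow> integrable (distr M borel (X 0)) g" by (simp add: distr_eq[of k])
  also have "\<dots> \<longleftrightarrow> integrable M (\<lambda>\<omega>. g (X 0 \<omega>))"
    by (rule integrable_distr_eq) auto
  finally show ?thesis .
qed

lemma same_prob:
  assumes [measurable]: "A \<in> sets borel"
  shows "prob {\<omega>\<in>space M. X k \<omega> \<in> A} = prob {\<omega>\<in>space M. X 0 \<omega> \<in> A}"
proof -
  have "prob {\<omega>\<in>space M. X k \<omega> \<in> A} = measure (distr M borel (X k)) A"
    by (subst measure_distr) (auto intro!: arg_cong[where f=prob])
  also have "\<dots> = measure (distr M borel (X 0)) A" by (simp add: distr_eq[of k])
  also have "\<dots> = prob {\<omega>\<in>space M. X 0 \<omega> \<in> A}"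
    by (subst measure_distr) (auto intro!: arg_cong[where f=prob])
  finally show ?thesis .
qed

lemma indep_pair: "i \<noteq> j \<Longrightarrow> indep_var borel (X i) borel (X j)"
  using indep_vars_pair[OF indep] by auto

lemma integrable_k: "integrable M (X k)"
  using same_integrable[of "\<lambda>x. x" k] int0 by simp

end


lemma bounded_integrable:
  fixes f :: "'a \<Rightarrow> real"
  assumes "finite_measure M" "f \<in> borel_measurable M" "\<And>\<omega>. \<bar>f \<omega>\<bar> \<le> B"
  shows "integrable M f"
  using assms by (intro finite_measure.integrable_const_bound[where B=B]) auto

lemma count_le:
  fixes x :: real
  assumes "x \<ge> 0"
  shows "(\<Sum>k<n. indicator {real (Suc k)<..} x :: real) \<le> x"
proof -
  have "(\<Sum>k<n. indicator {real (Suc k)<..} x :: real) \<le> real n \<and> (\<Sum>k<n. indicator {real (Suc k)<..} x :: real) \<le> x" for n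
  proof (induction n)
    case 0 then show ?case using assms by simp
  next
    case (Suc n)
    show ?case
    proof (cases "real (Suc n) < x")
      case True then show ?thesis using Suc by (simp add: indicator_def)
    next
      case False then show ?thesis using Suc by (simp add: indicator_def)
    qed
  qed
  then show ?thesis by blast
qed

definition kk :: "real \<Rightarrow> nat \<Rightarrow> nat" where "kk \<beta> n = nat \<lfloor>\<beta> ^ n\<rfloor>"

lemma kk_props:
  assumes b: "\<beta> > 1"
  shows "real (kk \<beta> n) \<le> \<beta> ^ n" "real (kk \<beta> n) > \<beta> ^ n - 1" "real (kk \<beta> n) \<ge> \<beta> ^ n / 2" "kk \<beta> n \<ge> 1"
proof -
  have p1: "\<beta> ^ n \<ge> 1" using b by (simp add: one_le_power)
  have fl: "real_of_int \<lfloor>\<beta> ^ n\<rfloor> \<ge> 1" using p1 by simp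
  have e: "real (kk \<beta> n) = real_of_int \<lfloor>\<beta> ^ n\<rfloor>" unfolding kk_def using fl by simp
  show "real (kk \<beta> n) \<le> \<beta> ^ n" unfolding e by simp
  show "real (kk \<beta> n) > \<beta> ^ n - 1" unfolding e by linarith
  show "real (kk \<beta> n) \<ge> \<beta> ^ n / 2" unfolding e using fl by linarith
  have "real (kk \<beta> n) \<ge> 1" using e fl by simp
  then show "kk \<beta> n \<ge> 1" by simp
qed

lemma kk_lim:
  assumes b: "\<beta> > 1"
  shows "filterlim (kk \<beta>) at_top sequentially"
  unfolding filterlim_at_top eventually_sequentially
proof (intro allI)
  fix Z :: nat
  obtain n0 where n0: "real Z + 1 < \<beta> ^ n0" using real_arch_pow[OF b] by blast
  show "\<exists>N. \<forall>n\<ge>N. Z \<le> kk \<beta> n"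
  proof (intro exI allI impI)
    fix n assume "n \<ge> n0"
    then have "\<beta> ^ n0 \<le> \<beta> ^ n" using b by (intro power_increasing) auto
    then show "Z \<le> kk \<beta> n" using kk_props(2)[OF b, of n] n0 by linarith
  qed
qed

lemma kk_ratio:
  assumes b: "\<beta> > 1"
  shows "(\<lambda>n. real (kk \<beta> (Suc n)) / real (kk \<beta> n)) \<longlonglongrightarrow> \<beta>"
proof -
  define r where "r n = real (kk \<beta> n) / \<beta> ^ n" for n
  have bp: "\<beta> ^ n > 0" for n using b by simp
  have r1: "r \<longlonglongrightarrow> 1"
  proof (rule tendsto_sandwich[where f="\<lambda>n. 1 - inverse (\<beta> ^ n)" and h="\<lambda>n. 1"])
    show "eventually (\<lambda>n. 1 - inverse (\<beta> ^ n) \<le> r n) sequentially"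
    proof (intro always_eventually allI)
      fix n
      have "1 - inverse (\<beta> ^ n) = (\<beta> ^ n - 1) / \<beta> ^ n" using bp[of n] b by (simp add: diff_divide_distrib inverse_eq_divide)
      also have "\<dots> \<le> r n" unfolding r_def using kk_props(2)[OF b, of n] bp[of n]
        by (intro divide_right_mono) auto
      finally show "1 - inverse (\<beta> ^ n) \<le> r n" .
    qed
    show "eventually (\<lambda>n. r n \<le> 1) sequentially"
      unfolding r_def using kk_props(1)[OF b] bp b by (intro always_eventually allI) (simp add: divide_le_eq)
    show "(\<lambda>n. 1 - inverse (\<beta> ^ n)) \<longlonglongrightarrow> 1"
      using tendsto_diff[OF tendsto_const LIMSEQ_inverse_realpow_zero[OF b], of 1] by simp
  qed simp
  have "(\<lambda>n. \<beta> * r (Suc n) / r n) \<longlonglongrightarrow> \<beta> * 1 / 1"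
    by (intro tendsto_divide tendsto_mult tendsto_const LIMSEQ_Suc[OF r1] r1) simp
  moreover have "\<beta> * r (Suc n) / r n = real (kk \<beta> (Suc n)) / real (kk \<beta> n)" for n
    using bp[of n] kk_props(4)[OF b, of n] b unfolding r_def by (simp add: field_simps)
  ultimately show ?thesis by simp
qed

lemma geo_sum_shift:
  fixes r :: real
  assumes "r \<noteq> 1"
  shows "(\<Sum>n<N. if n0 \<le> n then r ^ (n - n0) else 0) = (1 - r ^ (N - n0)) / (1 - r)"
proof (induction N)
  case 0 then show ?case by simp
next
  case (Suc N)
  show ?case
  proof (cases "n0 \<le> N")
    case True
    then have e: "Suc N - n0 = Suc (N - n0)" by simp
    have a: "(1 - r ^ k) / (1 - r) + r ^ k = (1 - r * r ^ k) / (1 - r)" for k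
      using assms by (simp add: field_simps)
    show ?thesis using Suc True a unfolding e by simp
  next
    case False
    then show ?thesis using Suc by simp
  qed
qed

lemma geo_bound:
  fixes x \<beta> :: real
  assumes x: "x > 0" and b: "\<beta> > 1"
  shows "(\<Sum>n<N. if x \<le> \<beta> ^ n then 1 / \<beta> ^ n else 0) \<le> \<beta> / (\<beta> - 1) / x"
proof -
  obtain m where m: "x < \<beta> ^ m" using real_arch_pow[OF b] by blast
  define n0 where "n0 = (LEAST n. x \<le> \<beta> ^ n)"
  have n0: "x \<le> \<beta> ^ n0" unfolding n0_def by (rule LeastI[of _ m]) (use m in simp)
  define r where "r = 1 / \<beta>"
  have r: "0 < r" "r < 1" unfolding r_def using b by auto
  have trm: "(if x \<le> \<beta> ^ n then 1 / \<beta> ^ n else 0) \<le> (1/x) * (if n0 \<le> n then r ^ (n - n0) else 0)" for n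
  proof (cases "x \<le> \<beta> ^ n")
    case True
    then have nn0: "n0 \<le> n" unfolding n0_def by (rule Least_le)
    have "\<beta> ^ n = \<beta> ^ n0 * \<beta> ^ (n - n0)" using nn0 by (simp flip: power_add)
    then have "1 / \<beta> ^ n = (1 / \<beta> ^ n0) * r ^ (n - n0)" unfolding r_def by (simp add: power_one_over)
    also have "\<dots> \<le> (1/x) * r ^ (n - n0)"
      using n0 x r by (intro mult_right_mono divide_left_mono) auto
    finally show ?thesis using True nn0 by simp
  qed (use x r in simp)
  have "(\<Sum>n<N. if x \<le> \<beta> ^ n then 1 / \<beta> ^ n else 0) \<le> (\<Sum>n<N. (1/x) * (if n0 \<le> n then r ^ (n - n0) else 0))"
    by (intro sum_mono trm)
  also have "\<dots> = (1/x) * (\<Sum>n<N. if n0 \<le> n then r ^ (n - n0) else 0)"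
    by (rule sum_distrib_left[symmetric])
  also have "\<dots> = (1/x) * ((1 - r ^ (N - n0)) / (1 - r))"
    by (subst geo_sum_shift) (use r in auto)
  also have "\<dots> \<le> (1/x) * (1 / (1 - r))"
    using r x by (intro mult_left_mono divide_right_mono) auto
  also have "\<dots> = \<beta> / (\<beta> - 1) / x" unfolding r_def using b by (simp add: field_simps)
  finally show ?thesis .
qed

lemma kk_sum_bound:
  fixes x \<beta> :: real
  assumes x: "x \<ge> 0" and b: "\<beta> > 1"
  shows "(\<Sum>n<N. (if x \<le> real (kk \<beta> n) then x\<^sup>2 else 0) / real (kk \<beta> n)) \<le> 2 * \<beta> / (\<beta> - 1) * x"
proof (cases "x = 0")
  case True then show ?thesis by simp
next
  case False
  then have x0: "x > 0" using x by simp
  have "(\<Sum>n<N. (if x \<le> real (kk \<beta> n) then x\<^sup>2 else 0) / real (kk \<beta> n))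
      \<le> (\<Sum>n<N. 2 * x\<^sup>2 * (if x \<le> \<beta> ^ n then 1 / \<beta> ^ n else 0))"
  proof (rule sum_mono)
    fix n
    have k1: "real (kk \<beta> n) \<ge> \<beta> ^ n / 2" "real (kk \<beta> n) \<le> \<beta> ^ n" "real (kk \<beta> n) > 0"
      using kk_props[OF b, of n] by auto
    show "(if x \<le> real (kk \<beta> n) then x\<^sup>2 else 0) / real (kk \<beta> n) \<le> 2 * x\<^sup>2 * (if x \<le> \<beta> ^ n then 1 / \<beta> ^ n else 0)"
    proof (cases "x \<le> real (kk \<beta> n)")
      case True
      then have xb: "x \<le> \<beta> ^ n" using k1 by simp
      have "x\<^sup>2 / real (kk \<beta> n) \<le> x\<^sup>2 / (\<beta> ^ n / 2)"
        using k1 b by (intro divide_left_mono) auto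
      moreover have "x\<^sup>2 / (\<beta> ^ n / 2) = 2 * x\<^sup>2 * (1 / \<beta> ^ n)" by simp
      ultimately show ?thesis using True xb by (simp add: mult.commute)
    qed (use k1 in simp)
  qed
  also have "\<dots> = 2 * x\<^sup>2 * (\<Sum>n<N. if x \<le> \<beta> ^ n then 1 / \<beta> ^ n else 0)"
    by (simp add: sum_distrib_left)
  also have "\<dots> \<le> 2 * x\<^sup>2 * (\<beta> / (\<beta> - 1) / x)"
    by (intro mult_left_mono geo_bound x0 b) auto
  also have "\<dots> = 2 * \<beta> / (\<beta> - 1) * x" using x0 b by (simp add: power2_eq_square field_simps)
  finally show ?thesis .
qed

locale iid_nonneg = iid_seq +
  assumes nonneg: "\<And>k \<omega>. X k \<omega> \<ge> 0"
begin

definition "tr k x = (if x \<le> real (Suc k) then x else (0::real))"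
definition "Y k \<omega> = tr k (X k \<omega>)"

lemma tr_meas[measurable]: "tr k \<in> borel_measurable borel"
  unfolding tr_def by measurable

lemma Y_meas[measurable]: "Y k \<in> borel_measurable M"
  unfolding Y_def by measurable

lemma tr_bound: "x \<ge> 0 \<Longrightarrow> 0 \<le> tr k x \<and> tr k x \<le> x \<and> tr k x \<le> real (Suc k)"
  unfolding tr_def by auto

lemma ev_eq: "AE \<omega> in M. eventually (\<lambda>k. X k \<omega> = Y k \<omega>) sequentially"
proof -
  define A where "A k = {\<omega>\<in>space M. X k \<omega> \<in> {real (Suc k)<..}}" for k
  have A_sets[measurable]: "A k \<in> sets M" for k unfolding A_def by measurable
  have pA: "measure M (A k) = prob {\<omega>\<in>space M. X 0 \<omega> \<in> {real (Suc k)<..}}" for k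
    unfolding A_def by (rule same_prob) auto
  have pA': "prob {\<omega>\<in>space M. X 0 \<omega> \<in> {real (Suc k)<..}} = expectation (\<lambda>\<omega>. indicator {real (Suc k)<..} (X 0 \<omega>))" for k
  proof -
    have "(\<lambda>\<omega>. indicator {real (Suc k)<..} (X 0 \<omega>) :: real) = indicator {\<omega>. X 0 \<omega> \<in> {real (Suc k)<..}}"
      by (auto simp: indicator_def)
    then show ?thesis by (simp add: Collect_conj_eq Int_commute)
  qed
  have "summable (\<lambda>k. measure M (A k))"
  proof (rule summableI_nonneg_bounded)
    fix n
    have ik: "integrable M (\<lambda>\<omega>. indicator {real (Suc k)<..} (X 0 \<omega>) :: real)" for k
      by (rule bounded_integrable[where B=1]) (auto simp: finite_measure_axioms indicator_def)
    have "(\<Sum>k<n. measure M (A k)) = (\<Sum>k<n. expectation (\<lambda>\<omega>. indicator {real (Suc k)<..} (X 0 \<omega>)))"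
      using pA pA' by simp
    also have "\<dots> = expectation (\<lambda>\<omega>. \<Sum>k<n. indicator {real (Suc k)<..} (X 0 \<omega>))"
    proof -
      have "integrable M (\<lambda>\<omega>. indicator {real (Suc k)<..} (X 0 \<omega>) :: real)" for k
        by (rule bounded_integrable[where B=1]) (auto simp: finite_measure_axioms indicator_def)
      then show ?thesis
        using Bochner_Integration.integral_sum[of "{..<n}" M "\<lambda>k \<omega>. indicator {real (Suc k)<..} (X 0 \<omega>) :: real"] by simp
    qed
    also have "\<dots> \<le> expectation (X 0)"
      using nonneg int0 ik by (intro integral_mono count_le Bochner_Integration.integrable_sum) auto
    finally show "(\<Sum>k<n. measure M (A k)) \<le> expectation (X 0)" .
  qed auto
  then have "AE \<omega> in M. eventually (\<lambda>k. \<omega> \<in> space M - A k) sequentially"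
    by (intro borel_cantelli_AE1) (auto simp: less_top[symmetric])
  then show ?thesis
  proof (rule AE_mp[OF _ AE_I2], intro impI)
    fix \<omega> assume "\<omega> \<in> space M" "eventually (\<lambda>k. \<omega> \<in> space M - A k) sequentially"
    then show "eventually (\<lambda>k. X k \<omega> = Y k \<omega>) sequentially"
      by (elim eventually_mono) (auto simp: A_def Y_def tr_def)
  qed
qed

lemma Y_integrable: "integrable M (Y k)"
  using nonneg tr_bound by (intro bounded_integrable[where B="real (Suc k)"]) (auto simp: finite_measure_axioms Y_def)

lemma EY_lim: "(\<lambda>k. expectation (Y k)) \<longlonglongrightarrow> expectation (X 0)"
proof -
  have eq: "expectation (Y k) = expectation (\<lambda>\<omega>. tr k (X 0 \<omega>))" for k
    unfolding Y_def by (rule same_integral) auto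
  have "(\<lambda>k. expectation (\<lambda>\<omega>. tr k (X 0 \<omega>))) \<longlonglongrightarrow> expectation (X 0)"
  proof (rule integral_dominated_convergence[where w="X 0"])
    show "AE \<omega> in M. (\<lambda>k. tr k (X 0 \<omega>)) \<longlonglongrightarrow> X 0 \<omega>"
    proof (rule AE_I2)
      fix \<omega>
      obtain K :: nat where "X 0 \<omega> \<le> real K" using real_arch_simple by blast
      then have "eventually (\<lambda>k. tr k (X 0 \<omega>) = X 0 \<omega>) sequentially"
        unfolding eventually_sequentially tr_def by (intro exI[of _ K]) auto
      then show "(\<lambda>k. tr k (X 0 \<omega>)) \<longlonglongrightarrow> X 0 \<omega>" by (rule tendsto_eventually)
    qed
    show "AE \<omega> in M. norm (tr k (X 0 \<omega>)) \<le> X 0 \<omega>" for k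
      using tr_bound[OF nonneg] by auto
  qed (use int0 in auto)
  then show ?thesis unfolding eq .
qed


definition "h (m::nat) x = (if x \<le> real m then x\<^sup>2 else (0::real))"

lemma h_meas[measurable]: "h m \<in> borel_measurable borel"
  unfolding h_def by measurable

lemma h_integrable: "integrable M (\<lambda>\<omega>. h m (X 0 \<omega>))"
proof (rule bounded_integrable[where B="(real m)\<^sup>2"])
  show "\<bar>h m (X 0 \<omega>)\<bar> \<le> (real m)\<^sup>2" for \<omega>
    using nonneg[of 0 \<omega>] by (auto simp: h_def intro: power_mono)
qed (auto simp: finite_measure_axioms)

lemma var_bound:
  "expectation (\<lambda>\<omega>. (\<Sum>j<m. (Y j \<omega> - expectation (Y j)))\<^sup>2) \<le> real m * expectation (\<lambda>\<omega>. h m (X 0 \<omega>))"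
proof -
  define c where "c j = expectation (Y j)" for j
  define Z where "Z j \<omega> = Y j \<omega> - c j" for j \<omega>
  have Zmeas[measurable]: "Z j \<in> borel_measurable M" for j unfolding Z_def by measurable
  have Zb: "\<bar>Z j \<omega>\<bar> \<le> real (Suc j) + \<bar>c j\<bar>" for j \<omega>
    using tr_bound[OF nonneg[of j \<omega>], of j] unfolding Z_def Y_def by auto
  have Zint: "integrable M (Z j)" for j
    using Zb by (intro bounded_integrable) (auto simp: finite_measure_axioms)
  have ZZint: "integrable M (\<lambda>\<omega>. Z j \<omega> * Z l \<omega>)" for j l
  proof (rule bounded_integrable[where B="(real (Suc j) + \<bar>c j\<bar>) * (real (Suc l) + \<bar>c l\<bar>)"])
    show "\<bar>Z j \<omega> * Z l \<omega>\<bar> \<le> (real (Suc j) + \<bar>c j\<bar>) * (real (Suc l) + \<bar>c l\<bar>)" for \<omega>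
      unfolding abs_mult using Zb by (intro mult_mono) auto
  qed (auto simp: finite_measure_axioms)
  have EZ: "expectation (Z j) = 0" for j
    unfolding Z_def c_def using Y_integrable by (simp add: prob_space)
  have indZ: "indep_var borel (Z j) borel (Z l)" if "j \<noteq> l" for j l
  proof -
    have "indep_var borel ((\<lambda>x. tr j x - c j) \<circ> X j) borel ((\<lambda>x. tr l x - c l) \<circ> X l)"
      by (rule indep_var_compose[OF indep_pair[OF that]]) auto
    moreover have "(\<lambda>x. tr j x - c j) \<circ> X j = Z j" "(\<lambda>x. tr l x - c l) \<circ> X l = Z l"
      by (auto simp: Z_def Y_def)
    ultimately show ?thesis by simp
  qed
  have cross: "expectation (\<lambda>\<omega>. Z j \<omega> * Z l \<omega>) = (if j = l then expectation (\<lambda>\<omega>. (Z j \<omega>)\<^sup>2) else 0)" for j l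
  proof (cases "j = l")
    case True then show ?thesis by (simp add: power2_eq_square)
  next
    case False
    then show ?thesis using indep_var_lebesgue_integral[OF indZ[OF False] Zint Zint] EZ by simp
  qed
  have "expectation (\<lambda>\<omega>. (\<Sum>j<m. (Y j \<omega> - expectation (Y j)))\<^sup>2) = expectation (\<lambda>\<omega>. \<Sum>j<m. \<Sum>l<m. Z j \<omega> * Z l \<omega>)"
    unfolding Z_def c_def power2_eq_square sum_product by simp
  also have "\<dots> = (\<Sum>j<m. \<Sum>l<m. expectation (\<lambda>\<omega>. Z j \<omega> * Z l \<omega>))"
    using ZZint by (simp add: Bochner_Integration.integral_sum Bochner_Integration.integrable_sum)
  also have "\<dots> = (\<Sum>j<m. expectation (\<lambda>\<omega>. (Z j \<omega>)\<^sup>2))"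
    unfolding cross by (simp add: sum.delta)
  also have "\<dots> \<le> (\<Sum>j<m. expectation (\<lambda>\<omega>. h m (X 0 \<omega>)))"
  proof (rule sum_mono)
    fix j assume j: "j \<in> {..<m}"
    have Y2int: "integrable M (\<lambda>\<omega>. (Y j \<omega>)\<^sup>2)"
      using tr_bound[OF nonneg] unfolding Y_def
      by (intro bounded_integrable[where B="(real (Suc j))\<^sup>2"]) (auto simp: finite_measure_axioms intro: power_mono)
    have "expectation (\<lambda>\<omega>. (Z j \<omega>)\<^sup>2) = expectation (\<lambda>\<omega>. (Y j \<omega>)\<^sup>2 - 2 * c j * Y j \<omega> + (c j)\<^sup>2)"
      unfolding Z_def by (simp add: power2_diff algebra_simps)
    also have "\<dots> = expectation (\<lambda>\<omega>. (Y j \<omega>)\<^sup>2) - (c j)\<^sup>2"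
      using Y2int Y_integrable[of j] by (simp add: c_def power2_eq_square prob_space)
    also have "\<dots> \<le> expectation (\<lambda>\<omega>. (Y j \<omega>)\<^sup>2)" by simp
    also have "\<dots> = expectation (\<lambda>\<omega>. (tr j (X 0 \<omega>))\<^sup>2)"
      unfolding Y_def by (rule same_integral) auto
    also have "\<dots> \<le> expectation (\<lambda>\<omega>. h m (X 0 \<omega>))"
    proof (rule integral_mono)
      show "integrable M (\<lambda>\<omega>. (tr j (X 0 \<omega>))\<^sup>2)"
        using tr_bound[OF nonneg] by (intro bounded_integrable[where B="(real (Suc j))\<^sup>2"]) (auto simp: finite_measure_axioms intro: power_mono)
      show "(tr j (X 0 \<omega>))\<^sup>2 \<le> h m (X 0 \<omega>)" for \<omega>
        using j nonneg[of 0 \<omega>] by (auto simp: tr_def h_def)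
    qed (rule h_integrable)
    finally show "expectation (\<lambda>\<omega>. (Z j \<omega>)\<^sup>2) \<le> expectation (\<lambda>\<omega>. h m (X 0 \<omega>))" .
  qed
  also have "\<dots> = real m * expectation (\<lambda>\<omega>. h m (X 0 \<omega>))" by simp
  finally show ?thesis .
qed


lemma D_bound: "\<bar>(\<Sum>j<m. (Y j \<omega> - expectation (Y j)))\<bar> \<le> (\<Sum>j<m. real (Suc j) + \<bar>expectation (Y j)\<bar>)"
proof -
  have "\<bar>(\<Sum>j<m. (Y j \<omega> - expectation (Y j)))\<bar> \<le> (\<Sum>j<m. \<bar>Y j \<omega> - expectation (Y j)\<bar>)" by (rule sum_abs)
  also have "\<dots> \<le> (\<Sum>j<m. real (Suc j) + \<bar>expectation (Y j)\<bar>)"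
    using tr_bound[OF nonneg] unfolding Y_def by (intro sum_mono) (smt (verit))
  finally show ?thesis .
qed

lemma sub_conv:
  assumes b: "\<beta> > 1"
  shows "AE \<omega> in M. (\<lambda>n. (\<Sum>j<kk \<beta> n. (Y j \<omega> - expectation (Y j))) / real (kk \<beta> n)) \<longlonglongrightarrow> 0"
proof -
  define K where "K = kk \<beta>"
  define D where "D n \<omega> = (\<Sum>j<K n. (Y j \<omega> - expectation (Y j)))" for n \<omega>
  define C where "C = 2 * \<beta> / (\<beta> - 1)"
  have Kpos: "real (K n) > 0" for n using kk_props(4)[OF b, of n] unfolding K_def by simp
  have Dmeas[measurable]: "D n \<in> borel_measurable M" for n unfolding D_def by measurable
  have Q_int: "integrable M (\<lambda>\<omega>. (D n \<omega>)\<^sup>2 / (real (K n))\<^sup>2)" for n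
  proof (rule bounded_integrable[where B="(\<Sum>j<K n. real (Suc j) + \<bar>expectation (Y j)\<bar>)\<^sup>2 / (real (K n))\<^sup>2"])
    show "\<bar>(D n \<omega>)\<^sup>2 / (real (K n))\<^sup>2\<bar> \<le> (\<Sum>j<K n. real (Suc j) + \<bar>expectation (Y j)\<bar>)\<^sup>2 / (real (K n))\<^sup>2" for \<omega>
    proof -
      have B0: "0 \<le> (\<Sum>j<K n. real (Suc j) + \<bar>expectation (Y j)\<bar>)" by (intro sum_nonneg) auto
      have "(D n \<omega>)\<^sup>2 \<le> (\<Sum>j<K n. real (Suc j) + \<bar>expectation (Y j)\<bar>)\<^sup>2"
        unfolding D_def using D_bound[of \<omega> "K n"] B0 by (subst power2_le_iff_abs_le) auto
      then show ?thesis by (auto intro!: divide_right_mono)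
    qed
  qed (auto simp: finite_measure_axioms)
  define g where "g n = expectation (\<lambda>\<omega>. h (K n) (X 0 \<omega>) / real (K n))" for n
  have g_nonneg: "g n \<ge> 0" for n unfolding g_def by (intro integral_nonneg_AE) (auto simp: h_def)
  have "summable g"
  proof (rule summableI_nonneg_bounded)
    fix N
    have "(\<Sum>n<N. g n) = expectation (\<lambda>\<omega>. \<Sum>n<N. h (K n) (X 0 \<omega>) / real (K n))"
      unfolding g_def using h_integrable by (subst Bochner_Integration.integral_sum) auto
    also have "\<dots> \<le> expectation (\<lambda>\<omega>. C * X 0 \<omega>)"
    proof (rule integral_mono)
      show "integrable M (\<lambda>\<omega>. \<Sum>n<N. h (K n) (X 0 \<omega>) / real (K n))"
        using h_integrable by auto
      show "integrable M (\<lambda>\<omega>. C * X 0 \<omega>)" using int0 by auto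
      show "(\<Sum>n<N. h (K n) (X 0 \<omega>) / real (K n)) \<le> C * X 0 \<omega>" for \<omega>
        unfolding h_def C_def K_def by (rule kk_sum_bound[OF nonneg b])
    qed
    finally show "(\<Sum>n<N. g n) \<le> expectation (\<lambda>\<omega>. C * X 0 \<omega>)" .
  qed (rule g_nonneg)
  define v where "v n = expectation (\<lambda>\<omega>. (D n \<omega>)\<^sup>2 / (real (K n))\<^sup>2)" for n
  have v_nonneg: "v n \<ge> 0" for n unfolding v_def by (intro integral_nonneg_AE) auto
  have v_le: "v n \<le> g n" for n
  proof -
    have "v n = expectation (\<lambda>\<omega>. (D n \<omega>)\<^sup>2) / (real (K n))\<^sup>2" unfolding v_def by simp
    also have "\<dots> \<le> real (K n) * expectation (\<lambda>\<omega>. h (K n) (X 0 \<omega>)) / (real (K n))\<^sup>2"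
      unfolding D_def by (intro divide_right_mono var_bound) auto
    also have "\<dots> = g n" unfolding g_def using Kpos[of n] by (simp add: power2_eq_square)
    finally show ?thesis .
  qed
  have "summable v"
    by (rule summable_comparison_test[OF _ \<open>summable g\<close>]) (use v_nonneg v_le in auto)
  have "(\<integral>\<^sup>+\<omega>. (\<Sum>n. ennreal ((D n \<omega>)\<^sup>2 / (real (K n))\<^sup>2)) \<partial>M) = (\<Sum>n. \<integral>\<^sup>+\<omega>. ennreal ((D n \<omega>)\<^sup>2 / (real (K n))\<^sup>2) \<partial>M)"
    by (rule nn_integral_suminf) auto
  also have "\<dots> = (\<Sum>n. ennreal (v n))"
    unfolding v_def using Q_int by (subst nn_integral_eq_integral) auto
  also have "\<dots> = ennreal (\<Sum>n. v n)"
    using v_nonneg \<open>summable v\<close> by (rule suminf_ennreal2)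
  finally have fin: "(\<integral>\<^sup>+\<omega>. (\<Sum>n. ennreal ((D n \<omega>)\<^sup>2 / (real (K n))\<^sup>2)) \<partial>M) \<noteq> \<infinity>" by simp
  have "AE \<omega> in M. (\<Sum>n. ennreal ((D n \<omega>)\<^sup>2 / (real (K n))\<^sup>2)) \<noteq> \<infinity>"
    by (rule nn_integral_noteq_infinite[OF _ fin]) measurable
  then show ?thesis
  proof (rule AE_mp[OF _ AE_I2], intro impI)
    fix \<omega> assume "(\<Sum>n. ennreal ((D n \<omega>)\<^sup>2 / (real (K n))\<^sup>2)) \<noteq> \<infinity>"
    then have "summable (\<lambda>n. (D n \<omega>)\<^sup>2 / (real (K n))\<^sup>2)"
      by (intro summable_suminf_not_top) auto
    then have "(\<lambda>n. (D n \<omega>)\<^sup>2 / (real (K n))\<^sup>2) \<longlonglongrightarrow> 0" by (rule summable_LIMSEQ_zero)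
    then have "(\<lambda>n. sqrt ((D n \<omega> / real (K n))\<^sup>2)) \<longlonglongrightarrow> sqrt 0"
      by (intro tendsto_real_sqrt) (simp add: power_divide)
    then have "(\<lambda>n. \<bar>D n \<omega> / real (K n)\<bar>) \<longlonglongrightarrow> 0" by simp
    then show "(\<lambda>n. (\<Sum>j<kk \<beta> n. (Y j \<omega> - expectation (Y j))) / real (kk \<beta> n)) \<longlonglongrightarrow> 0"
    proof -
      from \<open>(\<lambda>n. \<bar>D n \<omega> / real (K n)\<bar>) \<longlonglongrightarrow> 0\<close>
      have "(\<lambda>n. D n \<omega> / real (K n)) \<longlonglongrightarrow> 0" by (simp only: tendsto_rabs_zero_iff)
      then show ?thesis unfolding D_def K_def .
    qed
  qed
qed


lemma sub_lim:
  assumes b: "\<beta> > 1"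
  shows "AE \<omega> in M. (\<lambda>n. (\<Sum>j<kk \<beta> n. X j \<omega>) / real (kk \<beta> n)) \<longlonglongrightarrow> expectation (X 0)"
  using ev_eq sub_conv[OF b]
proof (eventually_elim)
  fix \<omega>
  assume ev: "eventually (\<lambda>k. X k \<omega> = Y k \<omega>) sequentially"
    and sc: "(\<lambda>n. (\<Sum>j<kk \<beta> n. (Y j \<omega> - expectation (Y j))) / real (kk \<beta> n)) \<longlonglongrightarrow> 0"
  define K where "K = kk \<beta>"
  have Klim: "filterlim K at_top sequentially" unfolding K_def by (rule kk_lim[OF b])
  have Kpos: "real (K n) > 0" for n using kk_props(4)[OF b, of n] unfolding K_def by simp
  have t2: "(\<lambda>n. (\<Sum>j<K n. expectation (Y j)) / real (K n)) \<longlonglongrightarrow> expectation (X 0)"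
    using filterlim_compose[OF cesaro[OF EY_lim] Klim] .
  obtain N0 where N0: "\<And>k. k \<ge> N0 \<Longrightarrow> X k \<omega> = Y k \<omega>" using ev unfolding eventually_sequentially by blast
  define c where "c = (\<Sum>j<N0. X j \<omega> - Y j \<omega>)"
  have cst: "(\<Sum>j<m. X j \<omega> - Y j \<omega>) = c" if "m \<ge> N0" for m
    using that
  proof (induction m rule: dec_induct)
    case base then show ?case unfolding c_def by simp
  next
    case (step m) then show ?case using N0[of m] by simp
  qed
  have rK: "filterlim (\<lambda>n. real (K n)) at_infinity sequentially"
    by (rule filterlim_at_top_imp_at_infinity[OF filterlim_compose[OF filterlim_real_sequentially Klim]])
  have t3': "(\<lambda>n. c / real (K n)) \<longlonglongrightarrow> 0"
    by (rule tendsto_divide_0[OF tendsto_const rK])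
  have evK: "eventually (\<lambda>n. K n \<ge> N0) sequentially" using Klim by (simp add: filterlim_at_top)
  have t3: "(\<lambda>n. (\<Sum>j<K n. X j \<omega> - Y j \<omega>) / real (K n)) \<longlonglongrightarrow> 0"
    by (rule Lim_transform_eventually[OF t3']) (use evK cst in \<open>auto elim: eventually_mono\<close>)
  have "(\<lambda>n. (\<Sum>j<K n. (Y j \<omega> - expectation (Y j))) / real (K n) + (\<Sum>j<K n. expectation (Y j)) / real (K n)
          + (\<Sum>j<K n. X j \<omega> - Y j \<omega>) / real (K n)) \<longlonglongrightarrow> 0 + expectation (X 0) + 0"
    using sc unfolding K_def[symmetric] by (intro tendsto_add t2 t3)
  moreover have "(\<Sum>j<K n. (Y j \<omega> - expectation (Y j))) / real (K n) + (\<Sum>j<K n. expectation (Y j)) / real (K n)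
          + (\<Sum>j<K n. X j \<omega> - Y j \<omega>) / real (K n) = (\<Sum>j<K n. X j \<omega>) / real (K n)" for n
    by (simp add: add_divide_distrib[symmetric] sum_subtractf)
  ultimately show "(\<lambda>n. (\<Sum>j<kk \<beta> n. X j \<omega>) / real (kk \<beta> n)) \<longlonglongrightarrow> expectation (X 0)"
    unfolding K_def by simp
qed

theorem slln_nonneg: "AE \<omega> in M. (\<lambda>n. (\<Sum>j<n. X j \<omega>) / real n) \<longlonglongrightarrow> expectation (X 0)"
proof -
  have "AE \<omega> in M. \<forall>j::nat. (\<lambda>n. (\<Sum>i<kk (1 + 1 / real (Suc j)) n. X i \<omega>) / real (kk (1 + 1 / real (Suc j)) n)) \<longlonglongrightarrow> expectation (X 0)"
    by (subst AE_all_countable) (auto intro!: sub_lim)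
  then show ?thesis
  proof (rule AE_mp[OF _ AE_I2], intro impI)
    fix \<omega>
    assume H: "\<forall>j::nat. (\<lambda>n. (\<Sum>i<kk (1 + 1 / real (Suc j)) n. X i \<omega>) / real (kk (1 + 1 / real (Suc j)) n)) \<longlonglongrightarrow> expectation (X 0)"
    show "(\<lambda>n. (\<Sum>j<n. X j \<omega>) / real n) \<longlonglongrightarrow> expectation (X 0)"
    proof (rule interp)
      show "mono (\<lambda>n. \<Sum>j<n. X j \<omega>)"
        unfolding mono_def using nonneg by (auto intro!: sum_mono2)
      show "0 \<le> (\<Sum>j<n. X j \<omega>)" for n using nonneg by (auto intro: sum_nonneg)
      show "0 \<le> expectation (X 0)" using nonneg by (auto intro: integral_nonneg_AE)
      fix j :: nat
      have b: "1 + 1 / real (Suc j) > 1" by simp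
      show "\<exists>kk'. filterlim kk' at_top sequentially \<and> (\<forall>n. 0 < kk' n) \<and>
          (\<lambda>n. real (kk' (Suc n)) / real (kk' n)) \<longlonglongrightarrow> 1 + 1 / real (Suc j) \<and>
          (\<lambda>n. (\<Sum>i<kk' n. X i \<omega>) / real (kk' n)) \<longlonglongrightarrow> expectation (X 0)"
        using kk_lim[OF b] kk_props(4)[OF b] kk_ratio[OF b] H
        by (intro exI[of _ "kk (1 + 1 / real (Suc j))"]) (auto simp del: of_nat_Suc intro: Suc_le_lessD)
    qed
  qed
qed

end


lemma (in iid_seq) iid_compose:
  fixes f :: "real \<Rightarrow> real"
  assumes [measurable]: "f \<in> borel_measurable borel" and "integrable M (\<lambda>\<omega>. f (X 0 \<omega>))"
  shows "iid_seq M (\<lambda>k \<omega>. f (X k \<omega>))"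
proof
  show "indep_vars (\<lambda>_. borel) (\<lambda>k \<omega>. f (X k \<omega>)) UNIV"
    by (rule indep_vars_compose2[OF indep]) auto
  fix k
  have "distr M borel (\<lambda>\<omega>. f (X k \<omega>)) = distr (distr M borel (X k)) borel f"
    by (subst distr_distr) (auto simp: comp_def)
  also have "\<dots> = distr (distr M borel (X 0)) borel f" by (simp add: distr_eq[of k])
  also have "\<dots> = distr M borel (\<lambda>\<omega>. f (X 0 \<omega>))"
    by (subst distr_distr) (auto simp: comp_def)
  finally show "distr M borel (\<lambda>\<omega>. f (X k \<omega>)) = distr M borel (\<lambda>\<omega>. f (X 0 \<omega>))" .
qed (fact assms(2))

theorem (in iid_seq) slln: "AE \<omega> in M. (\<lambda>n. (\<Sum>j<n. X j \<omega>) / real n) \<longlonglongrightarrow> expectation (X 0)"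
proof -
  have ip: "integrable M (\<lambda>\<omega>. max (X 0 \<omega>) 0)" using int0 by auto
  have iq: "integrable M (\<lambda>\<omega>. max (- X 0 \<omega>) 0)" using int0 by auto
  interpret P: iid_nonneg M "\<lambda>k \<omega>. max (X k \<omega>) 0"
  proof -
    interpret iid_seq M "\<lambda>k \<omega>. max (X k \<omega>) 0" by (rule iid_compose[OF _ ip]) auto
    show "iid_nonneg M (\<lambda>k \<omega>. max (X k \<omega>) 0)" by unfold_locales auto
  qed
  interpret Q: iid_nonneg M "\<lambda>k \<omega>. max (- X k \<omega>) 0"
  proof -
    interpret iid_seq M "\<lambda>k \<omega>. max (- X k \<omega>) 0" by (rule iid_compose[OF _ iq]) auto
    show "iid_nonneg M (\<lambda>k \<omega>. max (- X k \<omega>) 0)" by unfold_locales auto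
  qed
  show ?thesis
    using P.slln_nonneg Q.slln_nonneg
  proof eventually_elim
    fix \<omega>
    assume a: "(\<lambda>n. (\<Sum>j<n. max (X j \<omega>) 0) / real n) \<longlonglongrightarrow> expectation (\<lambda>\<omega>. max (X 0 \<omega>) 0)"
      and b: "(\<lambda>n. (\<Sum>j<n. max (- X j \<omega>) 0) / real n) \<longlonglongrightarrow> expectation (\<lambda>\<omega>. max (- X 0 \<omega>) 0)"
    have "(\<lambda>n. (\<Sum>j<n. max (X j \<omega>) 0) / real n - (\<Sum>j<n. max (- X j \<omega>) 0) / real n)
      \<longlonglongrightarrow> expectation (\<lambda>\<omega>. max (X 0 \<omega>) 0) - expectation (\<lambda>\<omega>. max (- X 0 \<omega>) 0)"
      by (rule tendsto_diff[OF a b])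
    moreover have "(\<Sum>j<n. max (X j \<omega>) 0) / real n - (\<Sum>j<n. max (- X j \<omega>) 0) / real n = (\<Sum>j<n. X j \<omega>) / real n" for n
    proof -
      have "(\<Sum>j<n. max (X j \<omega>) 0) - (\<Sum>j<n. max (- X j \<omega>) 0) = (\<Sum>j<n. X j \<omega>)"
        by (simp add: sum_subtractf[symmetric]) (intro sum.cong, auto)
      then show ?thesis by (simp add: diff_divide_distrib[symmetric])
    qed
    moreover have "expectation (\<lambda>\<omega>. max (X 0 \<omega>) 0) - expectation (\<lambda>\<omega>. max (- X 0 \<omega>) 0) = expectation (X 0)"
    proof -
      have "expectation (\<lambda>\<omega>. max (X 0 \<omega>) 0) - expectation (\<lambda>\<omega>. max (- X 0 \<omega>) 0)
          = expectation (\<lambda>\<omega>. max (X 0 \<omega>) 0 - max (- X 0 \<omega>) 0)"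
        using ip iq by simp
      also have "(\<lambda>\<omega>. max (X 0 \<omega>) 0 - max (- X 0 \<omega>) 0) = X 0" by (auto simp: max_def)
      finally show ?thesis .
    qed
    ultimately show "(\<lambda>n. (\<Sum>j<n. X j \<omega>) / real n) \<longlonglongrightarrow> expectation (X 0)" by simp
  qed
qed


lemma term_zero:
  fixes b :: "nat \<Rightarrow> real"
  assumes "(\<lambda>n. (\<Sum>k<n. b k) / real n) \<longlonglongrightarrow> \<alpha>"
  shows "(\<lambda>n. b n / real n) \<longlonglongrightarrow> 0"
proof -
  define S where "S n = (\<Sum>k<n. b k)" for n
  have A: "(\<lambda>n. S n / real n) \<longlonglongrightarrow> \<alpha>" using assms unfolding S_def .
  have "(\<lambda>n. S (Suc n) / real (Suc n) - S n / real n * (real n / real (Suc n))) \<longlonglongrightarrow> \<alpha> - \<alpha> * 1"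
    by (intro tendsto_diff tendsto_mult LIMSEQ_Suc[OF A] A LIMSEQ_n_over_Suc_n)
  moreover have "S (Suc n) / real (Suc n) - S n / real n * (real n / real (Suc n)) = b n / real (Suc n)" for n
  proof -
    have "S n / real n * (real n / real (Suc n)) = S n / real (Suc n)" by (cases "n = 0") (auto simp: S_def)
    then show ?thesis by (simp add: S_def add_divide_distrib)
  qed
  ultimately have B: "(\<lambda>n. b n / real (Suc n)) \<longlonglongrightarrow> 0" by simp
  have "(\<lambda>n. b n / real (Suc n) * (real (Suc n) / real n)) \<longlonglongrightarrow> 0 * 1"
    by (intro tendsto_mult B LIMSEQ_Suc_n_over_n)
  moreover have "b n / real (Suc n) * (real (Suc n) / real n) = b n / real n" for n
  proof -
    have "real (Suc n) \<noteq> 0" by simp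
    then show ?thesis by (simp only: times_divide_eq_left times_divide_eq_right) (simp add: divide_simps)
  qed
  ultimately show ?thesis by simp
qed

lemma mod_combine:
  fixes f :: "nat \<Rightarrow> real"
  assumes L: "L > 0" and H: "\<And>q. q < L \<Longrightarrow> (\<lambda>n. f (L * n + q)) \<longlonglongrightarrow> \<alpha>"
  shows "f \<longlonglongrightarrow> \<alpha>"
proof (rule LIMSEQ_I)
  fix e :: real assume e: "e > 0"
  have "\<forall>q\<in>{..<L}. eventually (\<lambda>n. norm (f (L * n + q) - \<alpha>) < e) sequentially"
    using H e by (auto simp: tendsto_iff dist_norm)
  then have "eventually (\<lambda>n. \<forall>q\<in>{..<L}. norm (f (L * n + q) - \<alpha>) < e) sequentially"
    by (intro eventually_ball_finite) auto
  then obtain N where N: "\<And>n q. n \<ge> N \<Longrightarrow> q < L \<Longrightarrow> norm (f (L * n + q) - \<alpha>) < e"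
    unfolding eventually_sequentially by blast
  show "\<exists>no. \<forall>T\<ge>no. norm (f T - \<alpha>) < e"
  proof (intro exI allI impI)
    fix T assume T: "T \<ge> L * N"
    have "T div L \<ge> N"
      using div_le_mono[OF T, of L] L by simp
    moreover have "T = L * (T div L) + T mod L" by simp
    moreover have "T mod L < L" using L by simp
    ultimately show "norm (f T - \<alpha>) < e" using N by metis
  qed
qed

lemma sum_lessThan_add:
  fixes a b :: nat
  shows "(\<Sum>t<a + b. g t) = (\<Sum>t<a. g t) + (\<Sum>j<b. g (a + j))"
  by (induction b) (auto simp: add.commute add.left_commute)

lemma residue_avg:
  fixes a :: "nat \<Rightarrow> real"
  assumes L: "L > 0" and H: "\<And>r. r < L \<Longrightarrow> (\<lambda>n. (\<Sum>k<n. a (r + L * k)) / real n) \<longlonglongrightarrow> \<alpha>"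
  shows "(\<lambda>T. (\<Sum>t<T. a t) / real T) \<longlonglongrightarrow> \<alpha>"
proof (rule mod_combine[OF L])
  fix q assume q: "q < L"
  have split: "(\<Sum>t<L * n. a t) = (\<Sum>r<L. \<Sum>k<n. a (r + L * k))" for n
  proof (induction n)
    case 0 then show ?case by simp
  next
    case (Suc n)
    have "(\<Sum>t<L * Suc n. a t) = (\<Sum>t<L * n. a t) + (\<Sum>j<L. a (L * n + j))"
      using sum_lessThan_add[of a "L * n" L] by (simp add: algebra_simps)
    also have "\<dots> = (\<Sum>r<L. \<Sum>k<Suc n. a (r + L * k))"
      using Suc by (simp add: sum.distrib algebra_simps)
    finally show ?case .
  qed
  have tz: "(\<lambda>n. a (r + L * n) / real n) \<longlonglongrightarrow> 0" if "r < L" for r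
    by (rule term_zero[OF H[OF that]])
  have rat: "(\<lambda>n. real n / real (L * n + q)) \<longlonglongrightarrow> 1 / real L"
  proof -
    have "(\<lambda>n. 1 / (real L + real q / real n)) \<longlonglongrightarrow> 1 / (real L + 0)"
      using L by (intro tendsto_divide tendsto_add tendsto_const tendsto_divide_0[OF tendsto_const]
          filterlim_at_top_imp_at_infinity filterlim_real_sequentially) auto
    moreover have "eventually (\<lambda>n. 1 / (real L + real q / real n) = real n / real (L * n + q)) sequentially"
      unfolding eventually_sequentially by (intro exI[of _ 1]) (auto simp: field_simps)
    ultimately show ?thesis by (simp add: Lim_transform_eventually)
  qed
  have t1: "(\<lambda>n. (\<Sum>r<L. (\<Sum>k<n. a (r + L * k)) / real n) * (real n / real (L * n + q))) \<longlonglongrightarrow> (\<Sum>r<L. \<alpha>) * (1 / real L)"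
    by (intro tendsto_mult tendsto_sum H rat) auto
  have t2: "(\<lambda>n. (\<Sum>j<q. a (j + L * n) / real n) * (real n / real (L * n + q))) \<longlonglongrightarrow> (\<Sum>j<q. 0) * (1 / real L)"
    using q by (intro tendsto_mult tendsto_sum tz rat) auto
  have "(\<lambda>n. (\<Sum>r<L. (\<Sum>k<n. a (r + L * k)) / real n) * (real n / real (L * n + q))
      + (\<Sum>j<q. a (j + L * n) / real n) * (real n / real (L * n + q))) \<longlonglongrightarrow> (\<Sum>r<L. \<alpha>) * (1 / real L) + (\<Sum>j<q. 0) * (1 / real L)"
    by (rule tendsto_add[OF t1 t2])
  moreover have "(\<Sum>r<L. \<alpha>) * (1 / real L) + (\<Sum>j<q. 0) * (1 / real L) = \<alpha>" using L by simp
  moreover have "eventually (\<lambda>n. (\<Sum>r<L. (\<Sum>k<n. a (r + L * k)) / real n) * (real n / real (L * n + q))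
      + (\<Sum>j<q. a (j + L * n) / real n) * (real n / real (L * n + q)) = (\<Sum>t<L * n + q. a t) / real (L * n + q)) sequentially"
  proof (rule eventually_sequentiallyI[of 1])
    fix n :: nat assume n: "n \<ge> 1"
    have "(\<Sum>r<L. (\<Sum>k<n. a (r + L * k)) / real n) * (real n / real (L * n + q))
      + (\<Sum>j<q. a (j + L * n) / real n) * (real n / real (L * n + q))
      = ((\<Sum>r<L. \<Sum>k<n. a (r + L * k)) + (\<Sum>j<q. a (L * n + j))) / real (L * n + q)"
    proof -
      have e1: "(\<Sum>r<L. (\<Sum>k<n. a (r + L * k)) / real n) * (real n / real (L * n + q)) = (\<Sum>r<L. \<Sum>k<n. a (r + L * k)) / real (L * n + q)"
        using n by (simp add: sum_divide_distrib[symmetric])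
      have e2: "(\<Sum>j<q. a (j + L * n) / real n) * (real n / real (L * n + q)) = (\<Sum>j<q. a (L * n + j)) / real (L * n + q)"
        using n by (simp add: sum_divide_distrib[symmetric] add.commute)
      show ?thesis unfolding e1 e2 by (simp add: add_divide_distrib)
    qed
    also have "\<dots> = (\<Sum>t<L * n + q. a t) / real (L * n + q)"
      by (simp add: sum_lessThan_add split)
    finally show "(\<Sum>r<L. (\<Sum>k<n. a (r + L * k)) / real n) * (real n / real (L * n + q))
      + (\<Sum>j<q. a (j + L * n) / real n) * (real n / real (L * n + q)) = (\<Sum>t<L * n + q. a t) / real (L * n + q)" .
  qed
  ultimately show "(\<lambda>n. (\<Sum>t<L * n + q. a t) / real (L * n + q)) \<longlonglongrightarrow> \<alpha>"
    by (simp add: Lim_transform_eventually)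
qed


lemma sum_hits:
  fixes g :: "nat \<Rightarrow> real"
  shows "(\<Sum>t<T. if Suc t \<in> S then g (Suc t) else 0) = (\<Sum>s\<in>S \<inter> {1..T}. g s)"
proof (induction T)
  case 0 then show ?case by simp
next
  case (Suc T)
  have "S \<inter> {1..Suc T} = (S \<inter> {1..T}) \<union> (if Suc T \<in> S then {Suc T} else {})"
    by (auto simp: le_Suc_eq)
  then show ?case using Suc by (auto simp: sum.union_disjoint)
qed

lemma hits_enum:
  fixes S :: "nat set"
  assumes inf: "infinite S" and S1: "\<And>t. t \<in> S \<Longrightarrow> 1 \<le> t"
  shows "S \<inter> {1..enumerate S j} = enumerate S ` {..<Suc j}"
proof
  have sm: "strict_mono (enumerate S)" by (rule strict_mono_enumerate[OF inf])
  show "S \<inter> {1..enumerate S j} \<subseteq> enumerate S ` {..<Suc j}"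
  proof
    fix s assume s: "s \<in> S \<inter> {1..enumerate S j}"
    then obtain k where k: "enumerate S k = s" using enumerate_Ex[OF inf] by blast
    then have "k \<le> j" using s sm by (auto simp: strict_mono_less_eq)
    then show "s \<in> enumerate S ` {..<Suc j}" using k by auto
  qed
  show "enumerate S ` {..<Suc j} \<subseteq> S \<inter> {1..enumerate S j}"
    using enumerate_in_set[OF inf] S1 sm by (auto simp: strict_mono_less_eq)
qed

lemma renewal:
  fixes S :: "nat set" and f :: "nat \<Rightarrow> real"
  assumes inf: "infinite S" and S1: "\<And>t. t \<in> S \<Longrightarrow> 1 \<le> t"
    and A: "(\<lambda>T. (\<Sum>t<T. if Suc t \<in> S then f (Suc t) else 0) / real T) \<longlonglongrightarrow> a"
    and H: "(\<lambda>T. (\<Sum>t<T. if Suc t \<in> S then 1 else 0) / real T) \<longlonglongrightarrow> p" and p: "p > 0"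
  shows "(\<lambda>i. (1 / real i) * (\<Sum>i'=1..i. f (enumerate S (i' - 1)))) \<longlonglongrightarrow> a / p"
proof -
  define e where "e = enumerate S"
  have sm: "strict_mono e" unfolding e_def by (rule strict_mono_enumerate[OF inf])
  have elim: "filterlim e at_top sequentially" by (rule filterlim_subseq[OF sm])
  have epos: "real (e j) > 0" for j using S1[OF enumerate_in_set[OF inf, of j]] unfolding e_def by simp
  have injf: "inj_on e X" for X using strict_mono_imp_inj_on[OF sm] by (auto intro: inj_on_subset)
  have hs: "(\<Sum>t<e j. if Suc t \<in> S then g (Suc t) else 0) = (\<Sum>k<Suc j. g (e k))" for g :: "nat \<Rightarrow> real" and j
  proof -
    have he: "S \<inter> {1..e j} = e ` {..<Suc j}" unfolding e_def by (rule hits_enum[OF inf S1])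
    show ?thesis unfolding sum_hits he using injf by (subst sum.reindex) auto
  qed
  have A': "(\<lambda>j. (\<Sum>t<e j. if Suc t \<in> S then f (Suc t) else 0) / real (e j)) \<longlonglongrightarrow> a"
    using filterlim_compose[OF A elim] .
  have H': "(\<lambda>j. (\<Sum>t<e j. if Suc t \<in> S then 1 else 0) / real (e j)) \<longlonglongrightarrow> p"
    using filterlim_compose[OF H elim] .
  have "(\<lambda>j. ((\<Sum>t<e j. if Suc t \<in> S then f (Suc t) else 0) / real (e j)) / ((\<Sum>t<e j. if Suc t \<in> S then 1 else 0) / real (e j))) \<longlonglongrightarrow> a / p"
    using p by (intro tendsto_divide A' H') auto
  moreover have "((\<Sum>t<e j. if Suc t \<in> S then f (Suc t) else 0) / real (e j)) / ((\<Sum>t<e j. if Suc t \<in> S then 1 else 0) / real (e j))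
      = (1 / real (Suc j)) * (\<Sum>i'=1..Suc j. f (enumerate S (i' - 1)))" for j
  proof -
    have "(\<Sum>i'=1..Suc j. f (enumerate S (i' - 1))) = (\<Sum>k<Suc j. f (e k))"
      unfolding e_def by (simp only: One_nat_def sum.shift_bounds_cl_Suc_ivl) (simp add: atLeast0AtMost lessThan_Suc_atMost)
    moreover have "(\<Sum>t<e j. if Suc t \<in> S then (1::real) else 0) = real (Suc j)"
      using hs[of "\<lambda>_. 1" j] by simp
    ultimately show ?thesis using epos[of j] hs[of f j] by simp
  qed
  ultimately have "(\<lambda>j. (1 / real (Suc j)) * (\<Sum>i'=1..Suc j. f (enumerate S (i' - 1)))) \<longlonglongrightarrow> a / p" by simp
  then show ?thesis by (rule LIMSEQ_imp_Suc)
qed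


lemma U_sum:
  fixes m0 d q :: real
  assumes d: "d \<noteq> 0" and sq: "q * (d + real N * m0) = m0 / d" and a: "a < N" and b: "b < N"
  shows "(\<Sum>k<N. (m0 + (if a = k then d else 0)) * ((if k = b then 1 / d else 0) - q)) = (if a = b then 1 else 0)"
proof -
  have "(\<Sum>k<N. (m0 + (if a = k then d else 0)) * ((if k = b then 1 / d else 0) - q))
      = (\<Sum>k<N. (if k = b then m0 / d else 0)) - (\<Sum>k<N. m0 * q) + (\<Sum>k<N. (if k = a then (if a = b then 1 else 0) else 0)) - (\<Sum>k<N. (if k = a then d * q else 0))"
  proof -
    have pt: "(m0 + (if a = k then d else 0)) * ((if k = b then 1 / d else 0) - q)
       = (if k = b then m0 / d else 0) - m0 * q + (if k = a then (if a = b then 1 else 0) else 0) - (if k = a then d * q else 0)" for k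
      using d by (auto simp: field_simps)
    show ?thesis unfolding pt by (simp only: sum.distrib sum_subtractf)
  qed
  also have "\<dots> = m0 / d - real N * m0 * q + (if a = b then 1 else 0) - d * q"
    using a b by (simp add: sum.delta)
  also have "\<dots> = (if a = b then 1 else 0)" using sq by (simp add: algebra_simps)
  finally show ?thesis .
qed

lemma Umat_inverse:
  fixes m0 m1 :: real
  assumes ne1: "m1 \<noteq> m0" and ne2: "m1 \<noteq> (1 - real N) * m0"
  shows "\<exists>B. mat_inverse (Umat N m0 m1) = Some B \<and> B * Umat N m0 m1 = 1\<^sub>m N \<and> B \<in> carrier_mat N N"
proof -
  define d where "d = m1 - m0"
  define q where "q = m0 / (d * (d + real N * m0))"
  have d: "d \<noteq> 0" unfolding d_def using ne1 by simp
  have s: "d + real N * m0 \<noteq> 0" unfolding d_def using ne2 by (simp add: algebra_simps)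
  have sq: "q * (d + real N * m0) = m0 / d" unfolding q_def divide_divide_eq_left[symmetric] using s by simp
  define U where "U = Umat N m0 m1"
  define V where "V = mat N N (\<lambda>(i, j). (if i = j then 1 / d else 0) - q)"
  have U: "U \<in> carrier_mat N N" unfolding U_def Umat_def by simp
  have V: "V \<in> carrier_mat N N" unfolding V_def by simp
  have Uij: "U $$ (i, j) = m0 + (if i = j then d else 0)" if "i < N" "j < N" for i j
    unfolding U_def Umat_def d_def using that by simp
  have Vij: "V $$ (i, j) = (if i = j then 1 / d else 0) - q" if "i < N" "j < N" for i j
    unfolding V_def using that by simp
  have UV: "U * V = 1\<^sub>m N"
  proof (rule eq_matI)
    fix i j assume ij: "i < dim_row (1\<^sub>m N :: real mat)" "j < dim_col (1\<^sub>m N :: real mat)"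
    then have i: "i < N" and j: "j < N" by auto
    have "(U * V) $$ (i, j) = (\<Sum>k<N. U $$ (i, k) * V $$ (k, j))"
      using U V i j by (simp add: scalar_prod_def atLeast0LessThan)
    also have "\<dots> = (\<Sum>k<N. (m0 + (if i = k then d else 0)) * ((if k = j then 1 / d else 0) - q))"
      using i j by (intro sum.cong) (auto simp: Uij Vij)
    also have "\<dots> = (if i = j then 1 else 0)" by (rule U_sum[OF d sq i j])
    finally show "(U * V) $$ (i, j) = 1\<^sub>m N $$ (i, j)" using i j by simp
  qed (use U V in auto)
  have VU: "V * U = 1\<^sub>m N"
  proof (rule eq_matI)
    fix i j assume ij: "i < dim_row (1\<^sub>m N :: real mat)" "j < dim_col (1\<^sub>m N :: real mat)"
    then have i: "i < N" and j: "j < N" by auto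
    have "(V * U) $$ (i, j) = (\<Sum>k<N. V $$ (i, k) * U $$ (k, j))"
      using U V i j by (simp add: scalar_prod_def atLeast0LessThan)
    also have "\<dots> = (\<Sum>k<N. (m0 + (if j = k then d else 0)) * ((if k = i then 1 / d else 0) - q))"
      using i j by (intro sum.cong) (auto simp: Uij Vij)
    also have "\<dots> = (if j = i then 1 else 0)" by (rule U_sum[OF d sq j i])
    finally show "(V * U) $$ (i, j) = 1\<^sub>m N $$ (i, j)" using i j by simp
  qed (use U V in auto)
  have units: "U \<in> Units (ring_mat TYPE(real) N undefined)"
    using U V UV VU unfolding Units_def ring_mat_def by auto
  have "mat_inverse U \<noteq> None"
    using mat_inverse(1)[OF U, of undefined] units by metis
  then obtain B where B: "mat_inverse U = Some B" by blast
  show ?thesis using mat_inverse(2)[OF U B] B unfolding U_def by blast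
qed


locale fir = prob_space +
  fixes u w :: "int \<Rightarrow> 'a \<Rightarrow> real"
  assumes indep: "indep_vars (\<lambda>_. borel) (\<lambda>i. case i of Inl t \<Rightarrow> u t | Inr t \<Rightarrow> w t) (UNIV :: (int + int) set)"
    and iid_u: "\<And>t. distr M borel (u t) = distr M borel (u 0)"
    and iid_w: "\<And>t. distr M borel (w t) = distr M borel (w 0)"
begin

definition xi :: "int + int \<Rightarrow> 'a \<Rightarrow> real" where
  "xi i = (case i of Inl t \<Rightarrow> u t | Inr t \<Rightarrow> w t)"

lemma indep_xi: "indep_vars (\<lambda>_. borel) xi UNIV"
  using indep unfolding xi_def[abs_def] .

lemma xi_meas[measurable]: "xi i \<in> borel_measurable M"
  using indep_xi unfolding indep_vars_def by auto

lemma u_meas[measurable]: "u t \<in> borel_measurable M"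
  using xi_meas[of "Inl t"] by (simp add: xi_def)

lemma w_meas[measurable]: "w t \<in> borel_measurable M"
  using xi_meas[of "Inr t"] by (simp add: xi_def)

lemma pair_distr:
  assumes "a \<noteq> b"
  shows "distr M (borel \<Otimes>\<^sub>M borel) (\<lambda>\<omega>. (xi a \<omega>, xi b \<omega>)) = distr M borel (xi a) \<Otimes>\<^sub>M distr M borel (xi b)"
proof -
  have "indep_var borel (xi a) borel (xi b)" using indep_vars_pair[OF indep_xi _ _ assms] by auto
  then show ?thesis unfolding indep_var_distribution_eq by simp
qed

lemma pair_expectation:
  fixes G :: "real \<times> real \<Rightarrow> real"
  assumes [measurable]: "G \<in> borel_measurable (borel \<Otimes>\<^sub>M borel)"
    and ab: "a \<noteq> b" and ab': "a' \<noteq> b'"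
    and da: "distr M borel (xi a) = distr M borel (xi a')" and db: "distr M borel (xi b) = distr M borel (xi b')"
  shows "expectation (\<lambda>\<omega>. G (xi a \<omega>, xi b \<omega>)) = expectation (\<lambda>\<omega>. G (xi a' \<omega>, xi b' \<omega>))"
    and "integrable M (\<lambda>\<omega>. G (xi a \<omega>, xi b \<omega>)) \<longleftrightarrow> integrable M (\<lambda>\<omega>. G (xi a' \<omega>, xi b' \<omega>))"
proof -
  have e: "distr M (borel \<Otimes>\<^sub>M borel) (\<lambda>\<omega>. (xi a \<omega>, xi b \<omega>)) = distr M (borel \<Otimes>\<^sub>M borel) (\<lambda>\<omega>. (xi a' \<omega>, xi b' \<omega>))"
    unfolding pair_distr[OF ab] pair_distr[OF ab'] da db ..
  have "expectation (\<lambda>\<omega>. G (xi a \<omega>, xi b \<omega>)) = integral\<^sup>L (distr M (borel \<Otimes>\<^sub>M borel) (\<lambda>\<omega>. (xi a \<omega>, xi b \<omega>))) G"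
    by (rule integral_distr[symmetric]) auto
  also have "\<dots> = integral\<^sup>L (distr M (borel \<Otimes>\<^sub>M borel) (\<lambda>\<omega>. (xi a' \<omega>, xi b' \<omega>))) G" unfolding e ..
  also have "\<dots> = expectation (\<lambda>\<omega>. G (xi a' \<omega>, xi b' \<omega>))"
    by (rule integral_distr) auto
  finally show "expectation (\<lambda>\<omega>. G (xi a \<omega>, xi b \<omega>)) = expectation (\<lambda>\<omega>. G (xi a' \<omega>, xi b' \<omega>))" .
  have "integrable M (\<lambda>\<omega>. G (xi a \<omega>, xi b \<omega>)) \<longleftrightarrow> integrable (distr M (borel \<Otimes>\<^sub>M borel) (\<lambda>\<omega>. (xi a \<omega>, xi b \<omega>))) G"
    by (rule integrable_distr_eq[symmetric]) auto
  also have "\<dots> \<longleftrightarrow> integrable (distr M (borel \<Otimes>\<^sub>M borel) (\<lambda>\<omega>. (xi a' \<omega>, xi b' \<omega>))) G" unfolding e ..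
  also have "\<dots> \<longleftrightarrow> integrable M (\<lambda>\<omega>. G (xi a' \<omega>, xi b' \<omega>))"
    by (rule integrable_distr_eq) auto
  finally show "integrable M (\<lambda>\<omega>. G (xi a \<omega>, xi b \<omega>)) \<longleftrightarrow> integrable M (\<lambda>\<omega>. G (xi a' \<omega>, xi b' \<omega>))" .
qed

lemma block_iid:
  fixes G :: "real \<times> real \<Rightarrow> real" and \<sigma> \<rho> :: "nat \<Rightarrow> int + int"
  assumes G[measurable]: "G \<in> borel_measurable (borel \<Otimes>\<^sub>M borel)"
    and neq: "\<And>k. \<sigma> k \<noteq> \<rho> k"
    and disj: "\<And>k l. k \<noteq> l \<Longrightarrow> {\<sigma> k, \<rho> k} \<inter> {\<sigma> l, \<rho> l} = {}"
    and ds: "\<And>k. distr M borel (xi (\<sigma> k)) = distr M borel (xi (\<sigma> 0))"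
    and dr: "\<And>k. distr M borel (xi (\<rho> k)) = distr M borel (xi (\<rho> 0))"
    and int: "integrable M (\<lambda>\<omega>. G (xi (\<sigma> 0) \<omega>, xi (\<rho> 0) \<omega>))"
  shows "iid_seq M (\<lambda>k \<omega>. G (xi (\<sigma> k) \<omega>, xi (\<rho> k) \<omega>))"
proof
  define K where "K k = {\<sigma> k, \<rho> k}" for k
  have dK: "disjoint_family_on K UNIV"
    unfolding disjoint_family_on_def K_def using disj by auto
  have I1: "indep_vars (\<lambda>k. Pi\<^sub>M (K k) (\<lambda>_. borel)) (\<lambda>k \<omega>. restrict (\<lambda>i. xi i \<omega>) (K k)) UNIV"
    by (rule indep_vars_restrict[OF indep_xi _ dK]) auto
  have I2: "indep_vars (\<lambda>_. borel) (\<lambda>k \<omega>. (\<lambda>f. G (f (\<sigma> k), f (\<rho> k))) (restrict (\<lambda>i. xi i \<omega>) (K k))) UNIV"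
  proof (rule indep_vars_compose2[OF I1])
    fix k :: nat
    have "(\<lambda>f. (f (\<sigma> k), f (\<rho> k))) \<in> measurable (Pi\<^sub>M (K k) (\<lambda>_. borel)) (borel \<Otimes>\<^sub>M borel)"
      by (intro measurable_Pair measurable_component_singleton) (auto simp: K_def)
    then show "(\<lambda>f. G (f (\<sigma> k), f (\<rho> k))) \<in> borel_measurable (Pi\<^sub>M (K k) (\<lambda>_. borel))"
      by (rule measurable_compose[OF _ G])
  qed
  moreover have "(\<lambda>k \<omega>. (\<lambda>f. G (f (\<sigma> k), f (\<rho> k))) (restrict (\<lambda>i. xi i \<omega>) (K k))) = (\<lambda>k \<omega>. G (xi (\<sigma> k) \<omega>, xi (\<rho> k) \<omega>))"
    by (auto simp: K_def fun_eq_iff)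
  ultimately show "indep_vars (\<lambda>_. borel) (\<lambda>k \<omega>. G (xi (\<sigma> k) \<omega>, xi (\<rho> k) \<omega>)) UNIV" by simp
next
  fix k
  have e: "distr M (borel \<Otimes>\<^sub>M borel) (\<lambda>\<omega>. (xi (\<sigma> k) \<omega>, xi (\<rho> k) \<omega>)) = distr M (borel \<Otimes>\<^sub>M borel) (\<lambda>\<omega>. (xi (\<sigma> 0) \<omega>, xi (\<rho> 0) \<omega>))"
    unfolding pair_distr[OF neq] ds[of k] dr[of k] ..
  have "distr M borel (\<lambda>\<omega>. G (xi (\<sigma> k) \<omega>, xi (\<rho> k) \<omega>)) = distr (distr M (borel \<Otimes>\<^sub>M borel) (\<lambda>\<omega>. (xi (\<sigma> k) \<omega>, xi (\<rho> k) \<omega>))) borel G"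
    by (subst distr_distr) (auto simp: comp_def)
  also have "\<dots> = distr (distr M (borel \<Otimes>\<^sub>M borel) (\<lambda>\<omega>. (xi (\<sigma> 0) \<omega>, xi (\<rho> 0) \<omega>))) borel G" unfolding e ..
  also have "\<dots> = distr M borel (\<lambda>\<omega>. G (xi (\<sigma> 0) \<omega>, xi (\<rho> 0) \<omega>))"
    by (subst distr_distr) (auto simp: comp_def)
  finally show "distr M borel (\<lambda>\<omega>. G (xi (\<sigma> k) \<omega>, xi (\<rho> k) \<omega>)) = distr M borel (\<lambda>\<omega>. G (xi (\<sigma> 0) \<omega>, xi (\<rho> 0) \<omega>))" .
qed (simp add: int)


lemma xi_Inl[simp]: "xi (Inl t) = u t" and xi_Inr[simp]: "xi (Inr t) = w t"
  by (simp_all add: xi_def)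

lemma block_slln:
  fixes G :: "real \<times> real \<Rightarrow> real" and \<rho> :: "int \<Rightarrow> int + int" and L :: nat
  assumes G[measurable]: "G \<in> borel_measurable (borel \<Otimes>\<^sub>M borel)"
    and L: "L > 0"
    and neq: "\<And>t. \<rho> t \<noteq> Inl t"
    and disj: "\<And>t s. t \<noteq> s \<Longrightarrow> int L dvd (t - s) \<Longrightarrow> {Inl t, \<rho> t} \<inter> {Inl s, \<rho> s} = {}"
    and dr: "\<And>t. distr M borel (xi (\<rho> t)) = distr M borel (xi (\<rho> 0))"
    and int: "integrable M (\<lambda>\<omega>. G (u 0 \<omega>, xi (\<rho> 0) \<omega>))"
  shows "AE \<omega> in M. (\<lambda>T. (\<Sum>t<T. G (u (int t + 1) \<omega>, xi (\<rho> (int t + 1)) \<omega>)) / real T)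
            \<longlonglongrightarrow> expectation (\<lambda>\<omega>. G (u 0 \<omega>, xi (\<rho> 0) \<omega>))"
proof -
  have du: "distr M borel (xi (Inl t)) = distr M borel (xi (Inl 0))" for t using iid_u by simp
  have neq': "Inl t \<noteq> \<rho> t" for t using neq[of t] by metis
  have int': "integrable M (\<lambda>\<omega>. G (xi (Inl 0) \<omega>, xi (\<rho> 0) \<omega>))" using int by simp
  have res: "AE \<omega> in M. (\<lambda>n. (\<Sum>k<n. G (u (int (r + L * k) + 1) \<omega>, xi (\<rho> (int (r + L * k) + 1)) \<omega>)) / real n)
            \<longlonglongrightarrow> expectation (\<lambda>\<omega>. G (u 0 \<omega>, xi (\<rho> 0) \<omega>))" for r
  proof -
    define \<sigma> :: "nat \<Rightarrow> int + int" where "\<sigma> k = Inl (int (r + L * k) + 1)" for k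
    define \<rho>k where "\<rho>k k = \<rho> (int (r + L * k) + 1)" for k :: nat
    have "iid_seq M (\<lambda>k \<omega>. G (xi (\<sigma> k) \<omega>, xi (\<rho>k k) \<omega>))"
    proof (rule block_iid[OF G])
      show "\<sigma> k \<noteq> \<rho>k k" for k unfolding \<sigma>_def \<rho>k_def by (rule neq')
      show "{\<sigma> k, \<rho>k k} \<inter> {\<sigma> l, \<rho>k l} = {}" if "k \<noteq> l" for k l
      proof -
        have "int (r + L * k) + 1 \<noteq> int (r + L * l) + 1" using that L by simp
        moreover have "int L dvd (int (r + L * k) + 1 - (int (r + L * l) + 1))"
          by (rule dvdI[of _ _ "int k - int l"]) (simp add: algebra_simps)
        ultimately show ?thesis unfolding \<sigma>_def \<rho>k_def by (rule disj)
      qed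
      show "distr M borel (xi (\<sigma> k)) = distr M borel (xi (\<sigma> 0))" for k
        unfolding \<sigma>_def using du by metis
      show "distr M borel (xi (\<rho>k k)) = distr M borel (xi (\<rho>k 0))" for k
        unfolding \<rho>k_def using dr by metis
      show "integrable M (\<lambda>\<omega>. G (xi (\<sigma> 0) \<omega>, xi (\<rho>k 0) \<omega>))"
        unfolding \<sigma>_def \<rho>k_def using int' pair_expectation(2)[OF G neq' neq', of "int (r + L * 0) + 1" 0] du dr by metis
    qed
    then interpret Z: iid_seq M "\<lambda>k \<omega>. G (xi (\<sigma> k) \<omega>, xi (\<rho>k k) \<omega>)" .
    have ez: "expectation (\<lambda>\<omega>. G (xi (\<sigma> 0) \<omega>, xi (\<rho>k 0) \<omega>)) = expectation (\<lambda>\<omega>. G (u 0 \<omega>, xi (\<rho> 0) \<omega>))"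
      unfolding \<sigma>_def \<rho>k_def using pair_expectation(1)[OF G neq' neq', of "int (r + L * 0) + 1" 0] du dr by simp
    show ?thesis using Z.slln unfolding ez by (simp add: \<sigma>_def \<rho>k_def)
  qed
  have "AE \<omega> in M. \<forall>r\<in>{..<L}. (\<lambda>n. (\<Sum>k<n. G (u (int (r + L * k) + 1) \<omega>, xi (\<rho> (int (r + L * k) + 1)) \<omega>)) / real n)
            \<longlonglongrightarrow> expectation (\<lambda>\<omega>. G (u 0 \<omega>, xi (\<rho> 0) \<omega>))"
    by (rule AE_finite_allI[OF finite_lessThan res])
  then show ?thesis
  proof (rule AE_mp[OF _ AE_I2], intro impI)
    fix \<omega>
    assume "\<forall>r\<in>{..<L}. (\<lambda>n. (\<Sum>k<n. G (u (int (r + L * k) + 1) \<omega>, xi (\<rho> (int (r + L * k) + 1)) \<omega>)) / real n)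
            \<longlonglongrightarrow> expectation (\<lambda>\<omega>. G (u 0 \<omega>, xi (\<rho> 0) \<omega>))"
    then show "(\<lambda>T. (\<Sum>t<T. G (u (int t + 1) \<omega>, xi (\<rho> (int t + 1)) \<omega>)) / real T)
            \<longlonglongrightarrow> expectation (\<lambda>\<omega>. G (u 0 \<omega>, xi (\<rho> 0) \<omega>))"
      by (intro residue_avg[OF L, where a="\<lambda>t. G (u (int t + 1) \<omega>, xi (\<rho> (int t + 1)) \<omega>)"]) auto
  qed
qed


lemma integrable_u: "integrable M (u 0) \<Longrightarrow> integrable M (u t)"
proof -
  assume "integrable M (u 0)"
  then have "integrable (distr M borel (u 0)) (\<lambda>x. x)" by (subst integrable_distr_eq) auto
  then have "integrable (distr M borel (u t)) (\<lambda>x. x)" by (simp add: iid_u[of t])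
  then show "integrable M (u t)" by (subst (asm) integrable_distr_eq) auto
qed

lemma integrable_w: "integrable M (w 0) \<Longrightarrow> integrable M (w t)"
proof -
  assume "integrable M (w 0)"
  then have "integrable (distr M borel (w 0)) (\<lambda>x. x)" by (subst integrable_distr_eq) auto
  then have "integrable (distr M borel (w t)) (\<lambda>x. x)" by (simp add: iid_w[of t])
  then show "integrable M (w t)" by (subst (asm) integrable_distr_eq) auto
qed

lemma expectation_u: "expectation (u t) = expectation (u 0)"
proof -
  have "expectation (u t) = integral\<^sup>L (distr M borel (u t)) (\<lambda>x. x)" by (subst integral_distr) auto
  also have "\<dots> = integral\<^sup>L (distr M borel (u 0)) (\<lambda>x. x)" by (simp add: iid_u[of t])
  also have "\<dots> = expectation (u 0)" by (subst integral_distr) auto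
  finally show ?thesis .
qed

lemma expectation_w: "expectation (w t) = expectation (w 0)"
proof -
  have "expectation (w t) = integral\<^sup>L (distr M borel (w t)) (\<lambda>x. x)" by (subst integral_distr) auto
  also have "\<dots> = integral\<^sup>L (distr M borel (w 0)) (\<lambda>x. x)" by (simp add: iid_w[of t])
  also have "\<dots> = expectation (w 0)" by (subst integral_distr) auto
  finally show ?thesis .
qed

lemma ind_prod:
  assumes b: "b \<noteq> Inl 0" and ib: "integrable M (xi b)"
  shows "expectation (\<lambda>\<omega>. if c < u 0 \<omega> then xi b \<omega> else 0) = measure M {x \<in> space M. u 0 x > c} * expectation (xi b)"
    and "integrable M (\<lambda>\<omega>. if c < u 0 \<omega> then xi b \<omega> else 0)"
proof -
  have iv: "indep_var borel (xi (Inl 0)) borel (xi b)"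
    using indep_vars_pair[OF indep_xi _ _ b[symmetric]] by auto
  have iv2: "indep_var borel ((\<lambda>x. if c < x then 1 else 0 :: real) \<circ> xi (Inl 0)) borel ((\<lambda>x. x) \<circ> xi b)"
    by (rule indep_var_compose[OF iv]) auto
  then have iv3: "indep_var borel (\<lambda>\<omega>. if c < u 0 \<omega> then 1 else 0 :: real) borel (xi b)"
    by (simp add: comp_def)
  have i1: "integrable M (\<lambda>\<omega>. if c < u 0 \<omega> then 1 else 0 :: real)"
    by (rule bounded_integrable[where B=1]) (auto simp: finite_measure_axioms)
  have eq: "(\<lambda>\<omega>. if c < u 0 \<omega> then xi b \<omega> else 0) = (\<lambda>\<omega>. (if c < u 0 \<omega> then 1 else 0) * xi b \<omega>)"
    by auto
  have e1: "expectation (\<lambda>\<omega>. if c < u 0 \<omega> then 1 else 0 :: real) = measure M {x \<in> space M. u 0 x > c}"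
  proof -
    have "(\<lambda>\<omega>. if c < u 0 \<omega> then 1 else 0 :: real) = indicator {x. u 0 x > c}" by (auto simp: indicator_def)
    then show ?thesis by (simp add: Collect_conj_eq Int_commute)
  qed
  show "expectation (\<lambda>\<omega>. if c < u 0 \<omega> then xi b \<omega> else 0) = measure M {x \<in> space M. u 0 x > c} * expectation (xi b)"
    unfolding eq using indep_var_lebesgue_integral[OF iv3 i1 ib] e1 by simp
  show "integrable M (\<lambda>\<omega>. if c < u 0 \<omega> then xi b \<omega> else 0)"
    unfolding eq using indep_var_integrable[OF iv3 i1 ib] .
qed

lemma lim_H:
  "AE \<omega> in M. (\<lambda>T. (\<Sum>t<T. if c < u (int t + 1) \<omega> then 1 else 0) / real T) \<longlonglongrightarrow> measure M {x \<in> space M. u 0 x > c}"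
proof -
  define G :: "real \<times> real \<Rightarrow> real" where "G p = (if c < fst p then 1 else 0)" for p
  have G[measurable]: "G \<in> borel_measurable (borel \<Otimes>\<^sub>M borel)" unfolding G_def by measurable
  have i1: "integrable M (\<lambda>\<omega>. if c < u 0 \<omega> then 1 else 0 :: real)"
    by (rule bounded_integrable[where B=1]) (auto simp: finite_measure_axioms)
  have e1: "expectation (\<lambda>\<omega>. if c < u 0 \<omega> then 1 else 0 :: real) = measure M {x \<in> space M. u 0 x > c}"
  proof -
    have "(\<lambda>\<omega>. if c < u 0 \<omega> then 1 else 0 :: real) = indicator {x. u 0 x > c}" by (auto simp: indicator_def)
    then show ?thesis by (simp add: Collect_conj_eq Int_commute)
  qed
  have "AE \<omega> in M. (\<lambda>T. (\<Sum>t<T. G (u (int t + 1) \<omega>, xi (Inr (int t + 1)) \<omega>)) / real T)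
            \<longlonglongrightarrow> expectation (\<lambda>\<omega>. G (u 0 \<omega>, xi (Inr 0) \<omega>))"
    by (rule block_slln[OF G, where L=1]) (use iid_w i1 in \<open>auto simp: G_def\<close>)
  then show ?thesis using e1 by (simp add: G_def)
qed

lemma lim_U0:
  assumes iu: "integrable M (u 0)"
  shows "AE \<omega> in M. (\<lambda>T. (\<Sum>t<T. if c < u (int t + 1) \<omega> then u (int t + 1) \<omega> else 0) / real T)
     \<longlonglongrightarrow> (\<integral>x. u 0 x * indicator {x \<in> space M. u 0 x > c} x \<partial>M)"
proof -
  define G :: "real \<times> real \<Rightarrow> real" where "G p = (if c < fst p then fst p else 0)" for p
  have G[measurable]: "G \<in> borel_measurable (borel \<Otimes>\<^sub>M borel)" unfolding G_def by measurable
  have i1: "integrable M (\<lambda>\<omega>. if c < u 0 \<omega> then u 0 \<omega> else 0)"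
    by (rule Bochner_Integration.integrable_bound[OF iu]) auto
  have e1: "expectation (\<lambda>\<omega>. if c < u 0 \<omega> then u 0 \<omega> else 0) = (\<integral>x. u 0 x * indicator {x \<in> space M. u 0 x > c} x \<partial>M)"
    by (intro Bochner_Integration.integral_cong) (auto simp: indicator_def)
  have "AE \<omega> in M. (\<lambda>T. (\<Sum>t<T. G (u (int t + 1) \<omega>, xi (Inr (int t + 1)) \<omega>)) / real T)
            \<longlonglongrightarrow> expectation (\<lambda>\<omega>. G (u 0 \<omega>, xi (Inr 0) \<omega>))"
  proof (rule block_slln[OF G, where L=1])
    have "(\<lambda>\<omega>. G (u 0 \<omega>, xi (Inr 0) \<omega>)) = (\<lambda>\<omega>. if c < u 0 \<omega> then u 0 \<omega> else 0)"
      by (auto simp: G_def fun_eq_iff)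
    then show "integrable M (\<lambda>\<omega>. G (u 0 \<omega>, xi (Inr 0) \<omega>))" using i1 by simp
  qed (use iid_w in auto)
  moreover have Gs: "G (x, y) = (if c < x then x else 0)" for x y by (simp add: G_def)
  ultimately show ?thesis using e1 unfolding Gs by simp
qed

lemma lim_cross:
  assumes b: "\<And>t. \<rho> t \<noteq> Inl t" and L: "L > 0"
    and disj: "\<And>t s. t \<noteq> s \<Longrightarrow> int L dvd (t - s) \<Longrightarrow> {Inl t, \<rho> t} \<inter> {Inl s, \<rho> s} = {}"
    and dr: "\<And>t. distr M borel (xi (\<rho> t)) = distr M borel (xi (\<rho> 0))"
    and ib: "integrable M (xi (\<rho> 0))"
  shows "AE \<omega> in M. (\<lambda>T. (\<Sum>t<T. if c < u (int t + 1) \<omega> then xi (\<rho> (int t + 1)) \<omega> else 0) / real T)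
     \<longlonglongrightarrow> measure M {x \<in> space M. u 0 x > c} * expectation (xi (\<rho> 0))"
proof -
  define G :: "real \<times> real \<Rightarrow> real" where "G p = (if c < fst p then snd p else 0)" for p
  have G[measurable]: "G \<in> borel_measurable (borel \<Otimes>\<^sub>M borel)" unfolding G_def by measurable
  have b0: "\<rho> 0 \<noteq> Inl 0" by (rule b)
  have "AE \<omega> in M. (\<lambda>T. (\<Sum>t<T. G (u (int t + 1) \<omega>, xi (\<rho> (int t + 1)) \<omega>)) / real T)
            \<longlonglongrightarrow> expectation (\<lambda>\<omega>. G (u 0 \<omega>, xi (\<rho> 0) \<omega>))"
  proof (rule block_slln[OF G L b disj dr])
    have "(\<lambda>\<omega>. G (u 0 \<omega>, xi (\<rho> 0) \<omega>)) = (\<lambda>\<omega>. if c < u 0 \<omega> then xi (\<rho> 0) \<omega> else 0)"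
      by (auto simp: G_def fun_eq_iff)
    then show "integrable M (\<lambda>\<omega>. G (u 0 \<omega>, xi (\<rho> 0) \<omega>))" using ind_prod(2)[OF b0 ib] by simp
  qed
  moreover have Gs: "G (x, y) = (if c < x then y else 0)" for x y by (simp add: G_def)
  ultimately show ?thesis using ind_prod(1)[OF b0 ib] unfolding Gs by simp
qed

end


lemma matvec_lim:
  fixes B :: "real mat" and f :: "nat \<Rightarrow> nat \<Rightarrow> real"
  assumes B: "B \<in> carrier_mat N N" and lim: "\<And>k. k < N \<Longrightarrow> (\<lambda>j. f j k) \<longlonglongrightarrow> g k" and i: "i < N"
  shows "(\<lambda>j. (B *\<^sub>v Matrix.vec N (\<lambda>k. f j k)) $ i) \<longlonglongrightarrow> (B *\<^sub>v Matrix.vec N g) $ i"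
proof -
  have e: "(B *\<^sub>v Matrix.vec N h) $ i = (\<Sum>k\<in>{0..<N}. B $$ (i, k) * h k)" for h
    using B i by (simp add: scalar_prod_def)
  show ?thesis unfolding e
    by (intro tendsto_sum tendsto_mult tendsto_const lim) auto
qed

lemma alpha_zero:
  fixes \<alpha> :: "nat \<Rightarrow> real"
  assumes "summable (\<lambda>j. (\<alpha> j)\<^sup>2)"
  shows "\<alpha> \<longlonglongrightarrow> 0"
proof -
  have "(\<lambda>j. (\<alpha> j)\<^sup>2) \<longlonglongrightarrow> 0" by (rule summable_LIMSEQ_zero[OF assms])
  then have "(\<lambda>j. sqrt ((\<alpha> j)\<^sup>2)) \<longlonglongrightarrow> sqrt 0" by (rule tendsto_real_sqrt)
  then have "(\<lambda>j. \<bar>\<alpha> j\<bar>) \<longlonglongrightarrow> 0" by simp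
  then show ?thesis by (simp only: tendsto_rabs_zero_iff)
qed

lemma infinite_hits:
  fixes S :: "nat set"
  assumes H: "(\<lambda>T. (\<Sum>t<T. if Suc t \<in> S then 1 else 0) / real T) \<longlonglongrightarrow> p" and p: "p > 0"
  shows "infinite S"
proof
  assume fin: "finite S"
  have le: "(\<Sum>t<T. if Suc t \<in> S then 1 else 0) \<le> real (card S)" for T
  proof -
    have "(\<Sum>t<T. if Suc t \<in> S then 1 else 0) = (\<Sum>s\<in>S \<inter> {1..T}. (1::real))"
      using sum_hits[where g="\<lambda>_. 1" and T=T and S=S] by simp
    also have "\<dots> = real (card (S \<inter> {1..T}))" by simp
    also have "\<dots> \<le> real (card S)" using fin by (simp add: card_mono)
    finally show ?thesis .
  qed
  have z: "(\<lambda>T. real (card S) / real T) \<longlonglongrightarrow> 0"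
    by (intro tendsto_divide_0[OF tendsto_const] filterlim_at_top_imp_at_infinity filterlim_real_sequentially)
  have "(\<lambda>T. (\<Sum>t<T. if Suc t \<in> S then 1 else 0) / real T) \<longlonglongrightarrow> 0"
  proof (rule tendsto_sandwich[OF _ _ tendsto_const z])
    show "eventually (\<lambda>T. 0 \<le> (\<Sum>t<T. if Suc t \<in> S then 1 else 0) / real T) sequentially"
      by (intro always_eventually allI divide_nonneg_nonneg sum_nonneg) auto
    show "eventually (\<lambda>T. (\<Sum>t<T. if Suc t \<in> S then 1 else 0) / real T \<le> real (card S) / real T) sequentially"
      using le by (intro always_eventually allI divide_right_mono) auto
  qed
  with H have "p = 0" by (rule LIMSEQ_unique)
  with p show False by simp
qed

lemma Ub_entry:
  fixes b :: "nat \<Rightarrow> real"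
  assumes n: "1 \<le> n" "n \<le> N"
  shows "(Umat N m0 m1 *\<^sub>v Matrix.vec N (\<lambda>k. b (k + 1))) $ (n - 1) = (\<Sum>k=1..N. b k * (if k = n then m1 else m0))"
proof -
  have "(Umat N m0 m1 *\<^sub>v Matrix.vec N (\<lambda>k. b (k + 1))) $ (n - 1) = (\<Sum>k\<in>{0..<N}. (if n - 1 = k then m1 else m0) * b (k + 1))"
    using n by (simp add: Umat_def scalar_prod_def)
  also have "\<dots> = (\<Sum>k=1..N. b k * (if k = n then m1 else m0))"
  proof -
    have "(\<Sum>k=1..N. b k * (if k = n then m1 else m0)) = (\<Sum>k\<in>{0..<N}. b (Suc k) * (if Suc k = n then m1 else m0))"
    proof -
      have "{1..N} = {Suc 0..<Suc N}" by auto
      then show ?thesis by (simp only: sum.shift_bounds_Suc_ivl)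
    qed
    also have "\<dots> = (\<Sum>k\<in>{0..<N}. (if n - 1 = k then m1 else m0) * b (k + 1))"
      using n by (intro sum.cong) auto
    finally show ?thesis by simp
  qed
  finally show ?thesis .
qed

theorem theorem3:
  fixes M :: "'a measure"
    and u w :: "int \<Rightarrow> 'a \<Rightarrow> real"
    and b :: "nat \<Rightarrow> real" and N :: nat and c :: real
    and \<alpha> :: "nat \<Rightarrow> real" and sg :: "real \<Rightarrow> real"
  assumes "prob_space M"
    and "N \<ge> 1"
    and meas: "\<And>t. u t \<in> borel_measurable M" "\<And>t. w t \<in> borel_measurable M"
    and indep: "prob_space.indep_vars M (\<lambda>_. borel)
                  (\<lambda>i. case i of Inl t \<Rightarrow> u t | Inr t \<Rightarrow> w t) (UNIV :: (int + int) set)"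
    and iid_u: "\<And>t. distr M borel (u t) = distr M borel (u 0)"
    and iid_w: "\<And>t. distr M borel (w t) = distr M borel (w 0)"
    and "integrable M (w 0)" and "(\<integral>x. w 0 x \<partial>M) = 0"
    and "integrable M (u 0)"
    and "measure M {x \<in> space M. u 0 x > c} > 0"
    and "cond_exp_above M (u 0) c \<noteq> (\<integral>x. u 0 x \<partial>M)"
    and "cond_exp_above M (u 0) c \<noteq> (1 - real N) * (\<integral>x. u 0 x \<partial>M)"
    and "\<And>j. j \<ge> 1 \<Longrightarrow> \<alpha> j > 0"
    and "\<not> summable \<alpha>"
    and "summable (\<lambda>j. (\<alpha> j)\<^sup>2)"
    and "\<And>x. x < 0 \<Longrightarrow> sg x = -1"
    and "\<And>x. x > 0 \<Longrightarrow> sg x = 1"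
  shows "AE \<omega> in M. \<forall>n\<in>{1..N}.
           (\<lambda>j. bhat b N u w c (\<integral>x. u 0 x \<partial>M) (cond_exp_above M (u 0) c) \<alpha> sg j \<omega> $ (n - 1))
             \<longlonglongrightarrow> b n"
proof -
  note ps = assms(1) and N1 = assms(2) and iw = assms(8) and Ew = assms(9) and iu = assms(10)
    and ppos = assms(11) and ne1 = assms(12) and ne2 = assms(13) and apos = assms(14)
    and nsum = assms(15) and sq = assms(16) and sgn = assms(17) assms(18)
  interpret fir M u w
    using ps indep iid_u iid_w by (simp add: fir_def fir_axioms_def)
  define p where "p = measure M {x \<in> space M. u 0 x > c}"
  define m0 where "m0 = (\<integral>x. u 0 x \<partial>M)"
  define m1 where "m1 = cond_exp_above M (u 0) c"
  define EU where "EU = (\<integral>x. u 0 x * indicator {x \<in> space M. u 0 x > c} x \<partial>M)"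
  have p0: "p > 0" unfolding p_def by (rule ppos)
  have m1e: "m1 = EU / p" unfolding m1_def EU_def p_def cond_exp_above_def ..
  obtain B where B: "mat_inverse (Umat N m0 m1) = Some B" "B * Umat N m0 m1 = 1\<^sub>m N" "B \<in> carrier_mat N N"
    using Umat_inverse[of m1 m0 N] ne1 ne2 unfolding m0_def m1_def by blast
  have AH: "AE \<omega> in M. (\<lambda>T. (\<Sum>t<T. if c < u (int t + 1) \<omega> then 1 else 0) / real T) \<longlonglongrightarrow> p"
    unfolding p_def by (rule lim_H)
  have AU: "AE \<omega> in M. (\<lambda>T. (\<Sum>t<T. if c < u (int t + 1) \<omega> then u (int t + 1) \<omega> else 0) / real T) \<longlonglongrightarrow> EU"
    unfolding EU_def by (rule lim_U0[OF iu])
  have AX: "AE \<omega> in M. \<forall>m::int. m \<noteq> 0 \<longrightarrow>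
      (\<lambda>T. (\<Sum>t<T. if c < u (int t + 1) \<omega> then u (int t + 1 + m) \<omega> else 0) / real T) \<longlonglongrightarrow> p * m0"
  proof (subst AE_all_countable, intro allI)
    fix m :: int
    show "AE \<omega> in M. m \<noteq> 0 \<longrightarrow>
      (\<lambda>T. (\<Sum>t<T. if c < u (int t + 1) \<omega> then u (int t + 1 + m) \<omega> else 0) / real T) \<longlonglongrightarrow> p * m0"
    proof (cases "m = 0")
      case True then show ?thesis by simp
    next
      case False
      define L where "L = nat \<bar>m\<bar> + 1"
      have "AE \<omega> in M. (\<lambda>T. (\<Sum>t<T. if c < u (int t + 1) \<omega> then xi (Inl (int t + 1 + m)) \<omega> else 0) / real T)
          \<longlonglongrightarrow> measure M {x \<in> space M. u 0 x > c} * expectation (xi (Inl (0 + m)))"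
      proof (rule lim_cross[where \<rho>="\<lambda>t. Inl (t + m)" and L=L])
        show "Inl (t + m) \<noteq> Inl t" for t using False by simp
        show "L > 0" unfolding L_def by simp
        show "{Inl t, Inl (t + m)} \<inter> {Inl s, Inl (s + m)} = {}" if ts: "t \<noteq> s" "int L dvd (t - s)" for t s :: int
        proof -
          have "\<bar>int L\<bar> \<le> \<bar>t - s\<bar>" using ts by (intro dvd_imp_le_int) auto
          then have "\<bar>t - s\<bar> > \<bar>m\<bar>" unfolding L_def by simp
          then show ?thesis using ts(1) by auto
        qed
        show "distr M borel (xi (Inl (t + m))) = distr M borel (xi (Inl (0 + m)))" for t
          using iid_u[of "t + m"] iid_u[of m] by simp
        show "integrable M (xi (Inl (0 + m)))" using integrable_u[OF iu] by simp
      qed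
      then show ?thesis using expectation_u[of m] unfolding p_def m0_def xi_Inl by simp
    qed
  qed
  have AW: "AE \<omega> in M. \<forall>n::int.
      (\<lambda>T. (\<Sum>t<T. if c < u (int t + 1) \<omega> then w (int t + 1 + n) \<omega> else 0) / real T) \<longlonglongrightarrow> 0"
  proof (subst AE_all_countable, intro allI)
    fix n :: int
    have "AE \<omega> in M. (\<lambda>T. (\<Sum>t<T. if c < u (int t + 1) \<omega> then xi (Inr (int t + 1 + n)) \<omega> else 0) / real T)
        \<longlonglongrightarrow> measure M {x \<in> space M. u 0 x > c} * expectation (xi (Inr (0 + n)))"
    proof (rule lim_cross[where \<rho>="\<lambda>t. Inr (t + n)" and L=1])
      show "distr M borel (xi (Inr (t + n))) = distr M borel (xi (Inr (0 + n)))" for t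
        using iid_w[of "t + n"] iid_w[of n] by simp
      show "integrable M (xi (Inr (0 + n)))" using integrable_w[OF iw] by simp
    qed auto
    then show "AE \<omega> in M. (\<lambda>T. (\<Sum>t<T. if c < u (int t + 1) \<omega> then w (int t + 1 + n) \<omega> else 0) / real T) \<longlonglongrightarrow> 0"
      using expectation_w[of n] Ew unfolding xi_Inr by simp
  qed
  have a0: "\<alpha> \<longlonglongrightarrow> 0" by (rule alpha_zero[OF sq])
  show ?thesis
    using AH AU AX AW
  proof eventually_elim
    fix \<omega>
    assume H: "(\<lambda>T. (\<Sum>t<T. if c < u (int t + 1) \<omega> then 1 else 0) / real T) \<longlonglongrightarrow> p"
      and U: "(\<lambda>T. (\<Sum>t<T. if c < u (int t + 1) \<omega> then u (int t + 1) \<omega> else 0) / real T) \<longlonglongrightarrow> EU"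
      and X: "\<forall>m::int. m \<noteq> 0 \<longrightarrow>
        (\<lambda>T. (\<Sum>t<T. if c < u (int t + 1) \<omega> then u (int t + 1 + m) \<omega> else 0) / real T) \<longlonglongrightarrow> p * m0"
      and W: "\<forall>n::int. (\<lambda>T. (\<Sum>t<T. if c < u (int t + 1) \<omega> then w (int t + 1 + n) \<omega> else 0) / real T) \<longlonglongrightarrow> 0"
    define S where "S = {t::nat. 1 \<le> t \<and> u (int t) \<omega> > c}"
    have hit: "Suc t \<in> S \<longleftrightarrow> c < u (int t + 1) \<omega>" for t unfolding S_def by (simp add: add.commute)
    have S1: "t \<in> S \<Longrightarrow> 1 \<le> t" for t unfolding S_def by simp
    have H': "(\<lambda>T. (\<Sum>t<T. if Suc t \<in> S then 1 else 0) / real T) \<longlonglongrightarrow> p" using H unfolding hit .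
    have inf: "infinite S" by (rule infinite_hits[OF H' p0])
    have tau_eq: "tau u c \<omega> i = int (enumerate S (i - 1))" for i unfolding tau_def S_def ..
    define dstar where "dstar n = (\<Sum>k=1..N. b k * (if k = n then m1 else m0))" for n
    have davg_lim: "(\<lambda>i. davg b N u w c n i \<omega>) \<longlonglongrightarrow> dstar n" if n: "n \<in> {1..N}" for n
    proof -
      define Lu where "Lu k i = (1 / real i) * (\<Sum>i'=1..i. u (int (enumerate S (i' - 1)) + int n - int k) \<omega>)" for k i
      define Lw where "Lw i = (1 / real i) * (\<Sum>i'=1..i. w (int (enumerate S (i' - 1)) + int n) \<omega>)" for i
      have Lu_lim: "(\<lambda>i. Lu k i) \<longlonglongrightarrow> (if k = n then m1 else m0)" for k
      proof (cases "k = n")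
        case True
        have "(\<lambda>T. (\<Sum>t<T. if Suc t \<in> S then u (int (Suc t) + int n - int k) \<omega> else 0) / real T) \<longlonglongrightarrow> EU"
          using U unfolding hit True by (simp add: algebra_simps cong: if_cong)
        note Af = this
        have "(\<lambda>i. Lu k i) \<longlonglongrightarrow> EU / p"
          unfolding Lu_def by (rule renewal[where f="\<lambda>s. u (int s + int n - int k) \<omega>", OF inf]) (use S1 Af H' p0 in auto)
        then show ?thesis using True m1e by simp
      next
        case False
        then have mne: "int n - int k \<noteq> 0" by simp
        have "(\<lambda>T. (\<Sum>t<T. if Suc t \<in> S then u (int (Suc t) + int n - int k) \<omega> else 0) / real T) \<longlonglongrightarrow> p * m0"
          using X[rule_format, OF mne] unfolding hit by (simp add: algebra_simps cong: if_cong)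
        note Af = this
        have "(\<lambda>i. Lu k i) \<longlonglongrightarrow> p * m0 / p"
          unfolding Lu_def by (rule renewal[where f="\<lambda>s. u (int s + int n - int k) \<omega>", OF inf]) (use S1 Af H' p0 in auto)
        then show ?thesis using False p0 by simp
      qed
      have Lw_lim: "(\<lambda>i. Lw i) \<longlonglongrightarrow> 0"
      proof -
        have "(\<lambda>T. (\<Sum>t<T. if Suc t \<in> S then w (int (Suc t) + int n) \<omega> else 0) / real T) \<longlonglongrightarrow> 0"
          using W[rule_format, of "int n"] unfolding hit by (simp add: algebra_simps cong: if_cong)
        note Af = this
        have "(\<lambda>i. Lw i) \<longlonglongrightarrow> 0 / p"
          unfolding Lw_def by (rule renewal[where f="\<lambda>s. w (int s + int n) \<omega>", OF inf]) (use S1 Af H' p0 in auto)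
        then show ?thesis by simp
      qed
      have dec: "davg b N u w c n i \<omega> = (\<Sum>k=1..N. b k * Lu k i) + Lw i" for i
      proof -
        have "davg b N u w c n i \<omega> = (1 / real i) * (\<Sum>i'=1..i. (\<Sum>k=1..N. b k * u (int (enumerate S (i' - 1)) + int n - int k) \<omega>) + w (int (enumerate S (i' - 1)) + int n) \<omega>)"
          unfolding davg_def fir_out_def tau_eq by simp
        also have "\<dots> = (\<Sum>k=1..N. b k * Lu k i) + Lw i"
          unfolding Lu_def Lw_def
          by (simp add: sum.distrib sum_distrib_left distrib_left sum.swap[of _ "{1..i}"] mult.left_commute) (rule sum.swap)
        finally show ?thesis .
      qed
      have "(\<lambda>i. (\<Sum>k=1..N. b k * Lu k i) + Lw i) \<longlonglongrightarrow> (\<Sum>k=1..N. b k * (if k = n then m1 else m0)) + 0"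
        by (intro tendsto_add tendsto_sum tendsto_mult tendsto_const Lu_lim Lw_lim)
      then show ?thesis unfolding dec dstar_def by simp
    qed
    have Nl: "filterlim (\<lambda>l. N * l) at_top sequentially"
      by (rule filterlim_subseq) (use N1 in \<open>auto simp: strict_mono_def\<close>)
    have dhat_lim: "(\<lambda>j. dhat \<alpha> sg (\<lambda>l. davg b N u w c n (N * l) \<omega>) j) \<longlonglongrightarrow> dstar n" if n: "n \<in> {1..N}" for n
    proof (rule dhat_conv[OF _ a0 apos nsum sgn])
      show "(\<lambda>l. davg b N u w c n (N * l) \<omega>) \<longlonglongrightarrow> dstar n"
        using filterlim_compose[OF davg_lim[OF n] Nl] .
    qed
    have vec_eq: "Matrix.vec N (\<lambda>k. dstar (k + 1)) = Umat N m0 m1 *\<^sub>v Matrix.vec N (\<lambda>k. b (k + 1))"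
    proof (rule eq_vecI)
      fix i assume "i < dim_vec (Umat N m0 m1 *\<^sub>v Matrix.vec N (\<lambda>k. b (k + 1)))"
      then have i: "i < N" by (simp add: Umat_def)
      show "Matrix.vec N (\<lambda>k. dstar (k + 1)) $ i = (Umat N m0 m1 *\<^sub>v Matrix.vec N (\<lambda>k. b (k + 1))) $ i"
        using Ub_entry[of "i + 1" N m0 m1 b] i unfolding dstar_def by simp
    qed (simp add: Umat_def)
    have final: "B *\<^sub>v Matrix.vec N (\<lambda>k. dstar (k + 1)) = Matrix.vec N (\<lambda>k. b (k + 1))"
    proof -
      have U: "Umat N m0 m1 \<in> carrier_mat N N" by (simp add: Umat_def)
      have "B *\<^sub>v (Umat N m0 m1 *\<^sub>v Matrix.vec N (\<lambda>k. b (k + 1))) = (B * Umat N m0 m1) *\<^sub>v Matrix.vec N (\<lambda>k. b (k + 1))"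
        using B(3) U by simp
      also have "\<dots> = Matrix.vec N (\<lambda>k. b (k + 1))" using B(2) by simp
      finally show ?thesis unfolding vec_eq .
    qed
    show "\<forall>n\<in>{1..N}. (\<lambda>j. bhat b N u w c (\<integral>x. u 0 x \<partial>M) (cond_exp_above M (u 0) c) \<alpha> sg j \<omega> $ (n - 1)) \<longlonglongrightarrow> b n"
    proof
      fix n assume n: "n \<in> {1..N}"
      have "(\<lambda>j. (B *\<^sub>v Matrix.vec N (\<lambda>k. dhat \<alpha> sg (\<lambda>l. davg b N u w c (k + 1) (N * l) \<omega>) j)) $ (n - 1))
          \<longlonglongrightarrow> (B *\<^sub>v Matrix.vec N (\<lambda>k. dstar (k + 1))) $ (n - 1)"
        by (rule matvec_lim[OF B(3)]) (use n in \<open>auto intro!: dhat_lim\<close>)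
      moreover have "(B *\<^sub>v Matrix.vec N (\<lambda>k. dstar (k + 1))) $ (n - 1) = b n"
        unfolding final using n by (cases n) auto
      ultimately show "(\<lambda>j. bhat b N u w c (\<integral>x. u 0 x \<partial>M) (cond_exp_above M (u 0) c) \<alpha> sg j \<omega> $ (n - 1)) \<longlonglongrightarrow> b n"
        unfolding bhat_def m0_def[symmetric] m1_def[symmetric] B(1) by simp
    qed
  qed
qed


end
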